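(* Let $k$ be a field, $\sigma$ an automorphism of $k$, and $\delta$ a $\sigma$-derivation of $k$. Then: (1) the skew series field $k((t,\sigma))$ is a regular extension of $k$; (2) the skew series field $k_{\sigma,\delta}((z))$ is a regular extension of $k$; (3) the skew rational fraction field $k(t,\sigma,\delta)$ is a regular extension of $k$.
   Context: Fields are not assumed commutative. An element $x$ of a field extension $h/k$ is algebraic over $k$ if the subfield $k(x)\subset h$ it generates has finite dimension both as a left and as a right $k$-vector space. A field extension $K/k$ is called regular if every element of $K$ algebraic over $k$ belongs to $k$. Consequently, if $k\subset L\subset K$ are fields and $K/k$ is regular, then $L/k$ is regular. The skew series field with right-hand coefficients $k_{\sigma,\delta}((z))$ consists of formal series $S=\sum_{i\ge n} z^i s_i$ ($n\in\mathbb{Z}$, $s_i\in k$), with left multiplication by $a\in k$ determined by $az=\sum_{i\ge 1} z^i\,\sigma\circ\delta^{i-1}(a)$. The skew series field $k((t,\sigma))$ consists of formal series $S=\sum_{i\ge n} s_i t^i$ ($n\in\mathbb{Z}$, $s_i\in k$) with $ta=\sigma(a)t$ for $a\in k$. $k(t,\sigma,\delta)$ denotes the skew field of fractions of the Ore polynomial ring $k[t,\sigma,\delta]$. There are $k$-embeddings $k(t,\sigma,\delta)\to k_{\sigma,\delta}((z))$, $t\mapsto z^{-1}$, and $k(t,\sigma)\to k((t,\sigma))$, $t\mapsto t$. *)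

theory Defs
  imports "HOL-Algebra.Ring" "HOL-Algebra.RingHom"
begin

definition ring_automorphism :: "('a::division_ring \<Rightarrow> 'a) \<Rightarrow> bool" where
  "ring_automorphism \<sigma> \<longleftrightarrow> bij \<sigma> \<and> (\<forall>a b. \<sigma> (a + b) = \<sigma> a + \<sigma> b)
     \<and> (\<forall>a b. \<sigma> (a * b) = \<sigma> a * \<sigma> b) \<and> \<sigma> 1 = 1"

definition sigma_derivation :: "('a::division_ring \<Rightarrow> 'a) \<Rightarrow> ('a \<Rightarrow> 'a) \<Rightarrow> bool" where
  "sigma_derivation \<sigma> \<delta> \<longleftrightarrow> (\<forall>a b. \<delta> (a + b) = \<delta> a + \<delta> b)
     \<and> (\<forall>a b. \<delta> (a * b) = \<sigma> a * \<delta> b + \<delta> a * b)"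

definition spow :: "('a \<Rightarrow> 'a) \<Rightarrow> int \<Rightarrow> 'a \<Rightarrow> 'a" where
  "spow \<sigma> i = (if 0 \<le> i then \<sigma> ^^ nat i else inv_into UNIV \<sigma> ^^ nat (- i))"

inductive_set gen_subfield :: "'b ring \<Rightarrow> ('a \<Rightarrow> 'b) \<Rightarrow> 'b \<Rightarrow> 'b set"
  for H :: "'b ring" and \<iota> :: "'a \<Rightarrow> 'b" and x :: 'b where
  base: "\<iota> a \<in> gen_subfield H \<iota> x"
| gen: "x \<in> gen_subfield H \<iota> x"
| add: "u \<in> gen_subfield H \<iota> x \<Longrightarrow> v \<in> gen_subfield H \<iota> x \<Longrightarrow> u \<oplus>\<^bsub>H\<^esub> v \<in> gen_subfield H \<iota> x"
| neg: "u \<in> gen_subfield H \<iota> x \<Longrightarrow> \<ominus>\<^bsub>H\<^esub> u \<in> gen_subfield H \<iota> x"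
| mult: "u \<in> gen_subfield H \<iota> x \<Longrightarrow> v \<in> gen_subfield H \<iota> x \<Longrightarrow> u \<otimes>\<^bsub>H\<^esub> v \<in> gen_subfield H \<iota> x"
| inv: "u \<in> gen_subfield H \<iota> x \<Longrightarrow> u \<in> Units H \<Longrightarrow> inv\<^bsub>H\<^esub> u \<in> gen_subfield H \<iota> x"

definition fin_dim_left :: "'b ring \<Rightarrow> ('a \<Rightarrow> 'b) \<Rightarrow> 'b set \<Rightarrow> bool" where
  "fin_dim_left H \<iota> V \<longleftrightarrow> (\<exists>S. finite S \<and> S \<subseteq> V \<and>
     (\<forall>y\<in>V. \<exists>c. y = (\<Oplus>\<^bsub>H\<^esub> s\<in>S. \<iota> (c s) \<otimes>\<^bsub>H\<^esub> s)))"

definition fin_dim_right :: "'b ring \<Rightarrow> ('a \<Rightarrow> 'b) \<Rightarrow> 'b set \<Rightarrow> bool" where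
  "fin_dim_right H \<iota> V \<longleftrightarrow> (\<exists>S. finite S \<and> S \<subseteq> V \<and>
     (\<forall>y\<in>V. \<exists>c. y = (\<Oplus>\<^bsub>H\<^esub> s\<in>S. s \<otimes>\<^bsub>H\<^esub> \<iota> (c s))))"

definition algebraic_over :: "'b ring \<Rightarrow> ('a \<Rightarrow> 'b) \<Rightarrow> 'b \<Rightarrow> bool" where
  "algebraic_over H \<iota> x \<longleftrightarrow>
     fin_dim_left H \<iota> (gen_subfield H \<iota> x) \<and> fin_dim_right H \<iota> (gen_subfield H \<iota> x)"

definition regular_ext :: "'b ring \<Rightarrow> ('a \<Rightarrow> 'b) \<Rightarrow> bool" where
  "regular_ext H \<iota> \<longleftrightarrow> (\<forall>x\<in>carrier H. algebraic_over H \<iota> x \<longrightarrow> x \<in> range \<iota>)"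

section \<open>Skew Laurent series k((t,sigma)), left coefficients, t a = sigma(a) t\<close>

definition laurent_carrier :: "(int \<Rightarrow> 'a::zero) set" where
  "laurent_carrier = {f. \<exists>n. \<forall>i<n. f i = 0}"

definition skew_series_t :: "('a::division_ring \<Rightarrow> 'a) \<Rightarrow> (int \<Rightarrow> 'a) ring" where
  "skew_series_t \<sigma> = \<lparr>carrier = laurent_carrier,
     mult = (\<lambda>f g m. \<Sum>i | f i \<noteq> 0 \<and> g (m - i) \<noteq> 0. f i * spow \<sigma> i (g (m - i))),
     one = (\<lambda>i. if i = 0 then 1 else 0),
     zero = (\<lambda>i. 0),
     add = (\<lambda>f g i. f i + g i)\<rparr>"

definition const_series :: "'a::zero \<Rightarrow> int \<Rightarrow> 'a" where
  "const_series a = (\<lambda>i. if i = 0 then a else 0)"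

section \<open>Skew Laurent series k_{sigma,delta}((z)), right coefficients,
  a z = sum_{i>=1} z^i sigma(delta^(i-1)(a))\<close>

text \<open>zpos n a l: coefficient of z^l in a z^n written as sum z^l c_l (right coefficients).\<close>
primrec zpos :: "('a::division_ring \<Rightarrow> 'a) \<Rightarrow> ('a \<Rightarrow> 'a) \<Rightarrow> nat \<Rightarrow> 'a \<Rightarrow> int \<Rightarrow> 'a" where
  "zpos \<sigma> \<delta> 0 a = (\<lambda>l. if l = 0 then a else 0)"
| "zpos \<sigma> \<delta> (Suc n) a = (\<lambda>p. \<Sum>i\<in>{1..nat (p - int n)}.
      \<sigma> ((\<delta> ^^ (i - 1)) (zpos \<sigma> \<delta> n a (p - int i))))"

text \<open>zneg n a l: coefficient of z^l in a z^(-n); uses a z^(-1) = z^(-1) sigma^(-1)(a) - delta(sigma^(-1)(a)).\<close>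
primrec zneg :: "('a::division_ring \<Rightarrow> 'a) \<Rightarrow> ('a \<Rightarrow> 'a) \<Rightarrow> nat \<Rightarrow> 'a \<Rightarrow> int \<Rightarrow> 'a" where
  "zneg \<sigma> \<delta> 0 a = (\<lambda>l. if l = 0 then a else 0)"
| "zneg \<sigma> \<delta> (Suc n) a = (\<lambda>p. inv_into UNIV \<sigma> (zneg \<sigma> \<delta> n a (p + 1)) - \<delta> (inv_into UNIV \<sigma> (zneg \<sigma> \<delta> n a p)))"

definition zcoeff :: "('a::division_ring \<Rightarrow> 'a) \<Rightarrow> ('a \<Rightarrow> 'a) \<Rightarrow> 'a \<Rightarrow> int \<Rightarrow> int \<Rightarrow> 'a" where
  "zcoeff \<sigma> \<delta> a j = (if 0 \<le> j then zpos \<sigma> \<delta> (nat j) a else zneg \<sigma> \<delta> (nat (- j)) a)"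

text \<open>(sum_i z^i s_i)(sum_j z^j r_j) = sum_{i,j} z^i (s_i z^j) r_j.\<close>
definition skew_series_z :: "('a::division_ring \<Rightarrow> 'a) \<Rightarrow> ('a \<Rightarrow> 'a) \<Rightarrow> (int \<Rightarrow> 'a) ring" where
  "skew_series_z \<sigma> \<delta> = \<lparr>carrier = laurent_carrier,
     mult = (\<lambda>s r m. \<Sum>p\<in>{(i, j). s i \<noteq> 0 \<and> r j \<noteq> 0 \<and> i + j \<le> m}.
                zcoeff \<sigma> \<delta> (s (fst p)) (snd p) (m - fst p) * r (snd p)),
     one = (\<lambda>i. if i = 0 then 1 else 0),
     zero = (\<lambda>i. 0),
     add = (\<lambda>f g i. f i + g i)\<rparr>"

section \<open>Ore polynomial ring k[t,sigma,delta], left coefficients, t a = sigma(a) t + delta(a)\<close>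

text \<open>tcoeff i b l: coefficient of t^l in t^i b.\<close>
primrec tcoeff :: "('a::division_ring \<Rightarrow> 'a) \<Rightarrow> ('a \<Rightarrow> 'a) \<Rightarrow> nat \<Rightarrow> 'a \<Rightarrow> nat \<Rightarrow> 'a" where
  "tcoeff \<sigma> \<delta> 0 b = (\<lambda>l. if l = 0 then b else 0)"
| "tcoeff \<sigma> \<delta> (Suc i) b = (\<lambda>l. (if 1 \<le> l then \<sigma> (tcoeff \<sigma> \<delta> i b (l - 1)) else 0)
                                 + \<delta> (tcoeff \<sigma> \<delta> i b l))"

definition ore_poly :: "('a::division_ring \<Rightarrow> 'a) \<Rightarrow> ('a \<Rightarrow> 'a) \<Rightarrow> (nat \<Rightarrow> 'a) ring" where
  "ore_poly \<sigma> \<delta> = \<lparr>carrier = {f. finite {i. f i \<noteq> 0}},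
     mult = (\<lambda>f g m. \<Sum>p\<in>{(i, j). f i \<noteq> 0 \<and> g j \<noteq> 0 \<and> j \<le> m}.
                f (fst p) * tcoeff \<sigma> \<delta> (fst p) (g (snd p)) (m - snd p)),
     one = (\<lambda>i. if i = 0 then 1 else 0),
     zero = (\<lambda>i. 0),
     add = (\<lambda>f g i. f i + g i)\<rparr>"

definition const_poly :: "'a::zero \<Rightarrow> nat \<Rightarrow> 'a" where
  "const_poly a = (\<lambda>i. if i = 0 then a else 0)"

definition division_ring_alg :: "'b ring \<Rightarrow> bool" where
  "division_ring_alg D \<longleftrightarrow> ring D \<and> \<one>\<^bsub>D\<^esub> \<noteq> \<zero>\<^bsub>D\<^esub>
     \<and> (\<forall>x\<in>carrier D. x \<noteq> \<zero>\<^bsub>D\<^esub> \<longrightarrow> x \<in> Units D)"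

definition is_skew_fraction_field :: "('a::division_ring \<Rightarrow> 'a) \<Rightarrow> ('a \<Rightarrow> 'a) \<Rightarrow> 'b ring \<Rightarrow> ((nat \<Rightarrow> 'a) \<Rightarrow> 'b) \<Rightarrow> bool" where
  "is_skew_fraction_field \<sigma> \<delta> D \<phi> \<longleftrightarrow> division_ring_alg D
     \<and> \<phi> \<in> ring_hom (ore_poly \<sigma> \<delta>) D \<and> inj_on \<phi> (carrier (ore_poly \<sigma> \<delta>))
     \<and> (\<forall>x\<in>carrier D. \<exists>p\<in>carrier (ore_poly \<sigma> \<delta>). \<exists>q\<in>carrier (ore_poly \<sigma> \<delta>).
           q \<noteq> \<zero>\<^bsub>ore_poly \<sigma> \<delta>\<^esub> \<and> x = \<phi> p \<otimes>\<^bsub>D\<^esub> inv\<^bsub>D\<^esub> (\<phi> q))"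

end

theory Submission
  imports Defs
begin

lemma ra_basic:
  fixes \<sigma> :: "'a::division_ring \<Rightarrow> 'a"
  assumes "ring_automorphism \<sigma>"
  shows "\<sigma> 0 = 0" "\<sigma> (- a) = - \<sigma> a" "\<sigma> (a - b) = \<sigma> a - \<sigma> b"
    "(\<sigma> a = 0) = (a = 0)" "inj \<sigma>" "\<sigma> (a + b) = \<sigma> a + \<sigma> b" "\<sigma> (a * b) = \<sigma> a * \<sigma> b" "\<sigma> 1 = 1"
proof -
  have add: "\<And>a b. \<sigma> (a + b) = \<sigma> a + \<sigma> b" and inj: "inj \<sigma>" and mu: "\<And>a b. \<sigma> (a * b) = \<sigma> a * \<sigma> b"
   and one: "\<sigma> 1 = 1"
    using assms unfolding ring_automorphism_def bij_def by blast+
  have z: "\<sigma> 0 = 0" using add[of 0 0] by simp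
  have n: "\<And>a. \<sigma> (- a) = - \<sigma> a" proof -
    fix a have "\<sigma> (- a) + \<sigma> a = 0" using add[of "-a" a] z by simp
    then show "\<sigma> (- a) = - \<sigma> a" by (simp add: eq_neg_iff_add_eq_0)
  qed
  show "\<sigma> 0 = 0" by (fact z)
  show "\<sigma> (- a) = - \<sigma> a" by (fact n)
  show "\<sigma> (a - b) = \<sigma> a - \<sigma> b" using add[of a "-b"] n[of b] by simp
  show "(\<sigma> a = 0) = (a = 0)" using inj z by (metis injD)
  show "inj \<sigma>" by (fact inj)
  show "\<sigma> (a + b) = \<sigma> a + \<sigma> b" by (fact add)
  show "\<sigma> (a * b) = \<sigma> a * \<sigma> b" by (fact mu)
  show "\<sigma> 1 = 1" by (fact one)
qed

lemma ra_inv: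
  fixes \<sigma> :: "'a::division_ring \<Rightarrow> 'a"
  assumes "ring_automorphism \<sigma>"
  shows "ring_automorphism (inv_into UNIV \<sigma>)"
proof -
  have b: "bij \<sigma>" using assms unfolding ring_automorphism_def by auto
  let ?i = "inv_into UNIV \<sigma>"
  have ff: "\<And>x. \<sigma> (?i x) = x" using b by (simp add: bij_is_surj surj_f_inv_f)
  have if_: "\<And>x. ?i (\<sigma> x) = x" using b by (simp add: bij_is_inj)
  show ?thesis unfolding ring_automorphism_def
  proof (intro conjI allI)
    show "bij ?i" using b by (simp add: bij_imp_bij_inv)
    fix a b
    show "?i (a + b) = ?i a + ?i b"
      by (metis ff if_ ra_basic(6)[OF assms])
    show "?i (a * b) = ?i a * ?i b"
      by (metis ff if_ ra_basic(7)[OF assms])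
  next
    show "?i 1 = 1" by (metis if_ ra_basic(8)[OF assms])
  qed
qed

lemma ra_pow:
  fixes \<sigma> :: "'a::division_ring \<Rightarrow> 'a"
  assumes "ring_automorphism \<sigma>"
  shows "ring_automorphism (\<sigma> ^^ n)"
proof (induction n)
  case 0 then show ?case by (simp add: ring_automorphism_def bij_id[unfolded id_def])
next
  case (Suc n)
  have b: "bij \<sigma>" using assms unfolding ring_automorphism_def by auto
  have b2: "bij (\<sigma> ^^ n)" using Suc unfolding ring_automorphism_def by auto
  have e: "\<sigma> ^^ Suc n = \<sigma> \<circ> (\<sigma> ^^ n)" by simp
  show ?case unfolding e ring_automorphism_def
  proof (intro conjI allI)
    show "bij (\<sigma> \<circ> \<sigma> ^^ n)" using bij_comp[OF b2 b] .
    fix a b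
    show "(\<sigma> \<circ> \<sigma> ^^ n) (a + b) = (\<sigma> \<circ> \<sigma> ^^ n) a + (\<sigma> \<circ> \<sigma> ^^ n) b"
      using ra_basic(6)[OF Suc] ra_basic(6)[OF assms] by simp
    show "(\<sigma> \<circ> \<sigma> ^^ n) (a * b) = (\<sigma> \<circ> \<sigma> ^^ n) a * (\<sigma> \<circ> \<sigma> ^^ n) b"
      using ra_basic(7)[OF Suc] ra_basic(7)[OF assms] by simp
  next
    show "(\<sigma> \<circ> \<sigma> ^^ n) 1 = 1" using ra_basic(8)[OF Suc] ra_basic(8)[OF assms] by simp
  qed
qed

lemma ra_spow:
  fixes \<sigma> :: "'a::division_ring \<Rightarrow> 'a"
  assumes "ring_automorphism \<sigma>"
  shows "ring_automorphism (spow \<sigma> i)"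
  unfolding spow_def using ra_pow[OF assms] ra_pow[OF ra_inv[OF assms]] by auto




section \<open>Laurent basics\<close>

definition isval :: "(int \<Rightarrow> 'a::zero) \<Rightarrow> int \<Rightarrow> bool" where
  "isval f v \<longleftrightarrow> f v \<noteq> 0 \<and> (\<forall>i<v. f i = 0)"

lemma isval_unique: "isval f v \<Longrightarrow> isval f w \<Longrightarrow> v = w"
  unfolding isval_def by (meson linorder_neqE)

lemma isval_exists:
  assumes "f \<in> laurent_carrier" "f \<noteq> (\<lambda>i. 0)"
  shows "\<exists>v. isval f v"
proof -
  obtain n where n: "\<And>i. i < n \<Longrightarrow> f i = 0" using assms(1) unfolding laurent_carrier_def by auto
  obtain j where j: "f j \<noteq> 0" using assms(2) by auto
  have jn: "j \<ge> n" using n j by force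
  define P where "P = (\<lambda>d::nat. f (n + int d) \<noteq> 0)"
  have Pj: "P (nat (j - n))" unfolding P_def using j jn by simp
  define d where "d = (LEAST d. P d)"
  have Pd: "P d" unfolding d_def using Pj by (rule LeastI)
  have isv: "isval f (n + int d)"
    unfolding isval_def
  proof (intro conjI allI impI)
    show "f (n + int d) \<noteq> 0" using Pd unfolding P_def .
    fix i assume i: "i < n + int d"
    show "f i = 0"
    proof (cases "i < n")
      case True then show ?thesis using n by simp
    next
      case False
      then have "nat (i - n) < d" using i by simp
      then have "\<not> P (nat (i - n))" unfolding d_def by (rule not_less_Least)
      then show ?thesis unfolding P_def using False by simp
    qed
  qed
  then show ?thesis by blast
qed

lemma isval_scale_left:
  fixes f :: "int \<Rightarrow> 'a::division_ring"
  assumes "a \<noteq> 0" shows "isval (\<lambda>i. a * f i) v = isval f v"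
  using assms unfolding isval_def by auto

lemma isval_scale_right:
  fixes f :: "int \<Rightarrow> 'a::division_ring"
  assumes "a \<noteq> 0" shows "isval (\<lambda>i. f i * a) v = isval f v"
  using assms unfolding isval_def by auto

lemma laurent_add: "(f::int \<Rightarrow> 'a::comm_monoid_add) \<in> laurent_carrier \<Longrightarrow> g \<in> laurent_carrier \<Longrightarrow> (\<lambda>i. f i + g i) \<in> laurent_carrier"
proof -
  assume "f \<in> laurent_carrier" "g \<in> laurent_carrier"
  then obtain n m where nm: "\<forall>i<n. f i = 0" "\<forall>i<m. g i = 0" unfolding laurent_carrier_def by auto
  have "\<forall>i<min n m. f i + g i = 0"
  proof (intro allI impI)
    fix i assume "i < min n m" then show "f i + g i = 0" using nm by simp
  qed
  then show ?thesis unfolding laurent_carrier_def by blast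
qed

lemma laurent_neg: "(f::int \<Rightarrow> 'a::ab_group_add) \<in> laurent_carrier \<Longrightarrow> (\<lambda>i. - f i) \<in> laurent_carrier"
  unfolding laurent_carrier_def by auto

lemma laurent_diff: "(f::int \<Rightarrow> 'a::ab_group_add) \<in> laurent_carrier \<Longrightarrow> g \<in> laurent_carrier \<Longrightarrow> (\<lambda>i. f i - g i) \<in> laurent_carrier"
  using laurent_add[of f "\<lambda>i. - g i"] laurent_neg[of g] by simp

lemma laurent_zero: "(\<lambda>i. 0) \<in> laurent_carrier"
  unfolding laurent_carrier_def by auto

lemma laurent_const: "const_series a \<in> laurent_carrier"
  unfolding laurent_carrier_def const_series_def by (rule CollectI, rule exI[of _ 0]) auto

lemma laurent_scale: "(f::int \<Rightarrow> 'a::division_ring) \<in> laurent_carrier \<Longrightarrow> (\<lambda>i. c * f i) \<in> laurent_carrier"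
  unfolding laurent_carrier_def by auto

lemma laurent_scale_r: "(f::int \<Rightarrow> 'a::division_ring) \<in> laurent_carrier \<Longrightarrow> (\<lambda>i. f i * c) \<in> laurent_carrier"
  unfolding laurent_carrier_def by auto

definition lstruct :: "(int \<Rightarrow> 'a::ab_group_add) ring \<Rightarrow> bool" where
  "lstruct H \<longleftrightarrow> carrier H = laurent_carrier \<and> zero H = (\<lambda>i. 0) \<and> add H = (\<lambda>f g i. f i + g i)"

lemma lstruct_group:
  assumes "lstruct H" shows "abelian_group H"
proof (rule abelian_groupI)
  have c: "carrier H = laurent_carrier" and z: "zero H = (\<lambda>i. 0)" and a: "add H = (\<lambda>f g i. f i + g i)"
    using assms unfolding lstruct_def by auto
  show "\<And>x y. x \<in> carrier H \<Longrightarrow> y \<in> carrier H \<Longrightarrow> x \<oplus>\<^bsub>H\<^esub> y \<in> carrier H"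
    using laurent_add by (simp add: c a)
  show "\<zero>\<^bsub>H\<^esub> \<in> carrier H" using laurent_zero by (simp add: c z)
  show "\<And>x y z. x \<in> carrier H \<Longrightarrow> y \<in> carrier H \<Longrightarrow> z \<in> carrier H \<Longrightarrow>
     x \<oplus>\<^bsub>H\<^esub> y \<oplus>\<^bsub>H\<^esub> z = x \<oplus>\<^bsub>H\<^esub> (y \<oplus>\<^bsub>H\<^esub> z)"
    by (simp add: a add.assoc)
  show "\<And>x y. x \<in> carrier H \<Longrightarrow> y \<in> carrier H \<Longrightarrow> x \<oplus>\<^bsub>H\<^esub> y = y \<oplus>\<^bsub>H\<^esub> x"
    by (simp add: a add.commute)
  show "\<And>x. x \<in> carrier H \<Longrightarrow> \<zero>\<^bsub>H\<^esub> \<oplus>\<^bsub>H\<^esub> x = x" by (simp add: a z)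
  show "\<And>x. x \<in> carrier H \<Longrightarrow> \<exists>y\<in>carrier H. y \<oplus>\<^bsub>H\<^esub> x = \<zero>\<^bsub>H\<^esub>"
  proof -
    fix x assume "x \<in> carrier H"
    then have "(\<lambda>i. - x i) \<in> carrier H" using laurent_neg by (simp add: c)
    moreover have "(\<lambda>i. - x i) \<oplus>\<^bsub>H\<^esub> x = \<zero>\<^bsub>H\<^esub>" by (simp add: a z)
    ultimately show "\<exists>y\<in>carrier H. y \<oplus>\<^bsub>H\<^esub> x = \<zero>\<^bsub>H\<^esub>" by blast
  qed
qed

lemma lstruct_neg:
  assumes "lstruct H" "f \<in> carrier H" shows "\<ominus>\<^bsub>H\<^esub> f = (\<lambda>i. - f i)"
proof -
  interpret abelian_group H by (rule lstruct_group[OF assms(1)])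
  have c: "carrier H = laurent_carrier" and z: "zero H = (\<lambda>i. 0)" and a: "add H = (\<lambda>f g i. f i + g i)"
    using assms unfolding lstruct_def by auto
  show ?thesis
    by (rule minus_equality) (use assms(2) laurent_neg in \<open>auto simp: a z c\<close>)
qed

lemma lstruct_finsum:
  assumes "lstruct H" "finite S" "f \<in> S \<rightarrow> carrier H"
  shows "finsum H f S = (\<lambda>i. \<Sum>s\<in>S. f s i)"
  using assms(2,3)
proof (induction S rule: finite_induct)
  case empty
  interpret abelian_group H by (rule lstruct_group[OF assms(1)])
  show ?case using assms(1) by (simp add: lstruct_def)
next
  case (insert s S)
  interpret abelian_group H by (rule lstruct_group[OF assms(1)])
  have a: "add H = (\<lambda>f g i. f i + g i)" using assms(1) unfolding lstruct_def by auto
  have "finsum H f (insert s S) = f s \<oplus>\<^bsub>H\<^esub> finsum H f S"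
    using insert by (intro finsum_insert) auto
  also have "\<dots> = (\<lambda>i. f s i + (\<Sum>s\<in>S. f s i))" using insert by (simp add: a)
  finally show ?case using insert by simp
qed

section \<open>Finitely many valuations in a finite span\<close>

definition lcombL :: "((int \<Rightarrow> 'a) \<Rightarrow> 'a) \<Rightarrow> (int \<Rightarrow> 'a) set \<Rightarrow> int \<Rightarrow> 'a::division_ring" where
  "lcombL c S = (\<lambda>i. \<Sum>s\<in>S. c s * s i)"

definition lcombR :: "((int \<Rightarrow> 'a) \<Rightarrow> 'a) \<Rightarrow> (int \<Rightarrow> 'a) set \<Rightarrow> int \<Rightarrow> 'a::division_ring" where
  "lcombR c S = (\<lambda>i. \<Sum>s\<in>S. s i * c s)"

definition VSL :: "(int \<Rightarrow> 'a::division_ring) set \<Rightarrow> int set" where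
  "VSL S = {w. \<exists>c. isval (lcombL c S) w}"

definition VSR :: "(int \<Rightarrow> 'a::division_ring) set \<Rightarrow> int set" where
  "VSR S = {w. \<exists>c. isval (lcombR c S) w}"

lemma finite_subsingleton: "(\<And>x y. x \<in> A \<Longrightarrow> y \<in> A \<Longrightarrow> x = y) \<Longrightarrow> finite A"
proof (cases "A = {}")
  case False
  then obtain a where "a \<in> A" by auto
  moreover assume "\<And>x y. x \<in> A \<Longrightarrow> y \<in> A \<Longrightarrow> x = y"
  ultimately have "A \<subseteq> {a}" by blast
  then show ?thesis using finite_subset by blast
qed simp

lemma isval_diff_lt:
  fixes e1 e2 :: "int \<Rightarrow> 'a::division_ring"
  assumes "isval e1 w1" "isval e2 w2" "w1 < w2"
  shows "isval (\<lambda>i. e1 i - e2 i) w1"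
  using assms unfolding isval_def by auto

lemma VSL_norm:
  fixes s :: "int \<Rightarrow> 'a::division_ring"
  assumes "finite S" "s \<notin> S" "w \<in> VSL (insert s S)" "w \<notin> VSL S"
  shows "\<exists>c. isval (\<lambda>i. s i + lcombL c S i) w"
proof -
  obtain c where c: "isval (lcombL c (insert s S)) w" using assms(3) unfolding VSL_def by auto
  have e: "lcombL c (insert s S) = (\<lambda>i. c s * s i + lcombL c S i)"
    using assms(1,2) unfolding lcombL_def by (simp add: sum.insert)
  have cs: "c s \<noteq> 0"
  proof
    assume "c s = 0"
    then have "lcombL c (insert s S) = lcombL c S" using e by simp
    then show False using c assms(4) unfolding VSL_def by auto
  qed
  define c' where "c' = (\<lambda>t. inverse (c s) * c t)"
  have "(\<lambda>i. inverse (c s) * lcombL c (insert s S) i) = (\<lambda>i. s i + lcombL c' S i)"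
  proof
    fix i
    have 1: "inverse (c s) * (c s * s i) = s i" using cs by (simp add: mult.assoc[symmetric])
    show "inverse (c s) * lcombL c (insert s S) i = s i + lcombL c' S i"
      unfolding c'_def lcombL_def using cs assms(1,2)
      by (simp add: distrib_left sum_distrib_left mult.assoc 1)
  qed
  moreover have "isval (\<lambda>i. inverse (c s) * lcombL c (insert s S) i) w"
    using c cs by (simp add: isval_scale_left)
  ultimately show ?thesis by auto
qed

lemma VSL_finite:
  fixes S :: "(int \<Rightarrow> 'a::division_ring) set"
  assumes "finite S" shows "finite (VSL S)"
  using assms
proof (induction S rule: finite_induct)
  case empty
  have "VSL ({} :: (int \<Rightarrow> 'a) set) = {}" unfolding VSL_def lcombL_def isval_def by auto
  then show ?case by simp
next
  case (insert s S)
  have key: "w1 = w2" if w1: "w1 \<in> VSL (insert s S) - VSL S" and w2: "w2 \<in> VSL (insert s S) - VSL S" for w1 w2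
  proof (rule ccontr)
    assume ne: "w1 \<noteq> w2"
    obtain c1 where c1: "isval (\<lambda>i. s i + lcombL c1 S i) w1" using VSL_norm[of S s w1] insert w1 by auto
    obtain c2 where c2: "isval (\<lambda>i. s i + lcombL c2 S i) w2" using VSL_norm[of S s w2] insert w2 by auto
    have d: "(\<lambda>i. (s i + lcombL c1 S i) - (s i + lcombL c2 S i)) = lcombL (\<lambda>t. c1 t - c2 t) S"
      unfolding lcombL_def by (simp add: left_diff_distrib sum_subtractf)
    show False
    proof (cases "w1 < w2")
      case True
      from isval_diff_lt[OF c1 c2 True] have "w1 \<in> VSL S" unfolding VSL_def d by blast
      then show False using w1 by blast
    next
      case False
      then have "w2 < w1" using ne by simp
      from isval_diff_lt[OF c2 c1 this] have "isval (\<lambda>i. (s i + lcombL c2 S i) - (s i + lcombL c1 S i)) w2" .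
      moreover have "(\<lambda>i. (s i + lcombL c2 S i) - (s i + lcombL c1 S i)) = lcombL (\<lambda>t. c2 t - c1 t) S"
        unfolding lcombL_def by (simp add: left_diff_distrib sum_subtractf)
      ultimately have "w2 \<in> VSL S" unfolding VSL_def by auto
      then show False using w2 by blast
    qed
  qed
  have "finite (VSL (insert s S) - VSL S)" by (rule finite_subsingleton) (use key in blast)
  moreover have "VSL (insert s S) \<subseteq> VSL S \<union> (VSL (insert s S) - VSL S)" by blast
  ultimately show ?case using insert.IH finite_subset by blast
qed

lemma VSR_norm:
  fixes s :: "int \<Rightarrow> 'a::division_ring"
  assumes "finite S" "s \<notin> S" "w \<in> VSR (insert s S)" "w \<notin> VSR S"
  shows "\<exists>c. isval (\<lambda>i. s i + lcombR c S i) w"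
proof -
  obtain c where c: "isval (lcombR c (insert s S)) w" using assms(3) unfolding VSR_def by auto
  have e: "lcombR c (insert s S) = (\<lambda>i. s i * c s + lcombR c S i)"
    using assms(1,2) unfolding lcombR_def by (simp add: sum.insert)
  have cs: "c s \<noteq> 0"
  proof
    assume "c s = 0"
    then have "lcombR c (insert s S) = lcombR c S" using e by simp
    then show False using c assms(4) unfolding VSR_def by auto
  qed
  define c' where "c' = (\<lambda>t. c t * inverse (c s))"
  have "(\<lambda>i. lcombR c (insert s S) i * inverse (c s)) = (\<lambda>i. s i + lcombR c' S i)"
  proof
    fix i
    have 1: "s i * c s * inverse (c s) = s i" using cs by (simp add: mult.assoc)
    show "lcombR c (insert s S) i * inverse (c s) = s i + lcombR c' S i"
      unfolding c'_def lcombR_def using cs assms(1,2)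
      by (simp add: distrib_right sum_distrib_right mult.assoc[symmetric] 1)
  qed
  moreover have "isval (\<lambda>i. lcombR c (insert s S) i * inverse (c s)) w"
    using c cs by (simp add: isval_scale_right)
  ultimately show ?thesis by auto
qed

lemma VSR_finite:
  fixes S :: "(int \<Rightarrow> 'a::division_ring) set"
  assumes "finite S" shows "finite (VSR S)"
  using assms
proof (induction S rule: finite_induct)
  case empty
  have "VSR ({} :: (int \<Rightarrow> 'a) set) = {}" unfolding VSR_def lcombR_def isval_def by auto
  then show ?case by simp
next
  case (insert s S)
  have key: "w1 = w2" if w1: "w1 \<in> VSR (insert s S) - VSR S" and w2: "w2 \<in> VSR (insert s S) - VSR S" for w1 w2
  proof (rule ccontr)
    assume ne: "w1 \<noteq> w2"
    obtain c1 where c1: "isval (\<lambda>i. s i + lcombR c1 S i) w1" using VSR_norm[of S s w1] insert w1 by auto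
    obtain c2 where c2: "isval (\<lambda>i. s i + lcombR c2 S i) w2" using VSR_norm[of S s w2] insert w2 by auto
    have d: "(\<lambda>i. (s i + lcombR c1 S i) - (s i + lcombR c2 S i)) = lcombR (\<lambda>t. c1 t - c2 t) S"
      unfolding lcombR_def by (simp add: right_diff_distrib sum_subtractf)
    show False
    proof (cases "w1 < w2")
      case True
      from isval_diff_lt[OF c1 c2 True] have "w1 \<in> VSR S" unfolding VSR_def d by blast
      then show False using w1 by blast
    next
      case False
      then have "w2 < w1" using ne by simp
      from isval_diff_lt[OF c2 c1 this] have "isval (\<lambda>i. (s i + lcombR c2 S i) - (s i + lcombR c1 S i)) w2" .
      moreover have "(\<lambda>i. (s i + lcombR c2 S i) - (s i + lcombR c1 S i)) = lcombR (\<lambda>t. c2 t - c1 t) S"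
        unfolding lcombR_def by (simp add: right_diff_distrib sum_subtractf)
      ultimately have "w2 \<in> VSR S" unfolding VSR_def by auto
      then show False using w2 by blast
    qed
  qed
  have "finite (VSR (insert s S) - VSR S)" by (rule finite_subsingleton) (use key in blast)
  moreover have "VSR (insert s S) \<subseteq> VSR S \<union> (VSR (insert s S) - VSR S)" by blast
  ultimately show ?case using insert.IH finite_subset by blast
qed


lemma gen_sub_carrier:
  assumes "\<And>a. \<iota> a \<in> carrier H" "x \<in> carrier H"
    "\<And>u v. u \<in> carrier H \<Longrightarrow> v \<in> carrier H \<Longrightarrow> u \<oplus>\<^bsub>H\<^esub> v \<in> carrier H"
    "\<And>u. u \<in> carrier H \<Longrightarrow> \<ominus>\<^bsub>H\<^esub> u \<in> carrier H"
    "\<And>u v. u \<in> carrier H \<Longrightarrow> v \<in> carrier H \<Longrightarrow> u \<otimes>\<^bsub>H\<^esub> v \<in> carrier H"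
    "\<And>u. u \<in> Units H \<Longrightarrow> inv\<^bsub>H\<^esub> u \<in> carrier H"
  shows "gen_subfield H \<iota> x \<subseteq> carrier H"
proof
  fix y assume "y \<in> gen_subfield H \<iota> x"
  then show "y \<in> carrier H"
    by (induction rule: gen_subfield.induct) (use assms in auto)
qed

lemma units_inv_carrier:
  assumes "u \<in> Units H"
    and uniq: "\<And>v w. v \<in> carrier H \<Longrightarrow> w \<in> carrier H \<Longrightarrow> u \<otimes>\<^bsub>H\<^esub> v = \<one>\<^bsub>H\<^esub> \<Longrightarrow> u \<otimes>\<^bsub>H\<^esub> w = \<one>\<^bsub>H\<^esub> \<Longrightarrow> v = w"
  shows "inv\<^bsub>H\<^esub> u \<in> carrier H"
proof -
  obtain x where x: "x \<in> carrier H" "x \<otimes>\<^bsub>H\<^esub> u = \<one>\<^bsub>H\<^esub>" "u \<otimes>\<^bsub>H\<^esub> x = \<one>\<^bsub>H\<^esub>"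
    using assms(1) unfolding Units_def by auto
  have "inv\<^bsub>H\<^esub> u = x" unfolding m_inv_def
  proof (rule the_equality)
    show "x \<in> carrier H \<and> u \<otimes>\<^bsub>H\<^esub> x = \<one>\<^bsub>H\<^esub> \<and> x \<otimes>\<^bsub>H\<^esub> u = \<one>\<^bsub>H\<^esub>" using x by blast
    fix y assume "y \<in> carrier H \<and> u \<otimes>\<^bsub>H\<^esub> y = \<one>\<^bsub>H\<^esub> \<and> y \<otimes>\<^bsub>H\<^esub> u = \<one>\<^bsub>H\<^esub>"
    then show "y = x" using uniq[of y x] x by blast
  qed
  then show ?thesis using x by simp
qed

lemma lin_inj:
  fixes H :: "(int \<Rightarrow> 'a::division_ring) ring"
  assumes ls: "lstruct H"
   and mv: "\<And>f g a b. f \<in> carrier H \<Longrightarrow> g \<in> carrier H \<Longrightarrow> isval f a \<Longrightarrow> isval g b \<Longrightarrow> isval (f \<otimes>\<^bsub>H\<^esub> g) (a+b)"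
   and lin: "\<And>u v w. u \<in> carrier H \<Longrightarrow> v \<in> carrier H \<Longrightarrow> w \<in> carrier H \<Longrightarrow>
        u \<otimes>\<^bsub>H\<^esub> (\<lambda>i. v i - w i) = (\<lambda>m. (u \<otimes>\<^bsub>H\<^esub> v) m - (u \<otimes>\<^bsub>H\<^esub> w) m)"
   and u: "u \<in> carrier H" "u \<noteq> (\<lambda>i. 0)" and vw: "v \<in> carrier H" "w \<in> carrier H" "u \<otimes>\<^bsub>H\<^esub> v = u \<otimes>\<^bsub>H\<^esub> w"
  shows "v = w"
proof (rule ccontr)
  assume ne: "v \<noteq> w"
  have c: "carrier H = laurent_carrier" using ls unfolding lstruct_def by auto
  define d where "d = (\<lambda>i. v i - w i)"
  have dc: "d \<in> carrier H" unfolding d_def using vw laurent_diff c by auto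
  have dnz: "d \<noteq> (\<lambda>i. 0)"
  proof
    assume "d = (\<lambda>i. 0)"
    then have "\<And>i. v i = w i" unfolding d_def by (metis right_minus_eq)
    then show False using ne by auto
  qed
  obtain e where e: "isval d e" using isval_exists dc dnz c by auto
  obtain a where a: "isval u a" using isval_exists u c by auto
  have "isval (u \<otimes>\<^bsub>H\<^esub> d) (a + e)" using mv[OF u(1) dc a e] .
  moreover have "u \<otimes>\<^bsub>H\<^esub> d = (\<lambda>m. 0)" unfolding d_def using lin[OF u(1) vw(1,2)] vw(3) by simp
  ultimately show False unfolding isval_def by simp
qed

lemma series_inv_carrier:
  fixes H :: "(int \<Rightarrow> 'a::division_ring) ring"
  assumes ls: "lstruct H"
   and mv: "\<And>f g a b. f \<in> carrier H \<Longrightarrow> g \<in> carrier H \<Longrightarrow> isval f a \<Longrightarrow> isval g b \<Longrightarrow> isval (f \<otimes>\<^bsub>H\<^esub> g) (a+b)"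
   and lin: "\<And>u v w. u \<in> carrier H \<Longrightarrow> v \<in> carrier H \<Longrightarrow> w \<in> carrier H \<Longrightarrow>
        u \<otimes>\<^bsub>H\<^esub> (\<lambda>i. v i - w i) = (\<lambda>m. (u \<otimes>\<^bsub>H\<^esub> v) m - (u \<otimes>\<^bsub>H\<^esub> w) m)"
   and zl: "\<And>g. g \<in> carrier H \<Longrightarrow> (\<lambda>i. 0) \<otimes>\<^bsub>H\<^esub> g = (\<lambda>i. 0)"
   and one: "\<one>\<^bsub>H\<^esub> \<noteq> (\<lambda>i. 0)"
   and u: "u \<in> Units H"
  shows "inv\<^bsub>H\<^esub> u \<in> carrier H"
proof (rule units_inv_carrier[OF u])
  have uc: "u \<in> carrier H" using u unfolding Units_def by auto
  obtain x where x: "x \<in> carrier H" "u \<otimes>\<^bsub>H\<^esub> x = \<one>\<^bsub>H\<^esub>" using u unfolding Units_def by auto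
  have unz: "u \<noteq> (\<lambda>i. 0)"
  proof
    assume u0: "u = (\<lambda>i. 0)"
    have "\<one>\<^bsub>H\<^esub> = u \<otimes>\<^bsub>H\<^esub> x" using x(2) by simp
    also have "\<dots> = (\<lambda>i. 0)" unfolding u0 by (rule zl[OF x(1)])
    finally have "\<one>\<^bsub>H\<^esub> = (\<lambda>i. 0)" .
    then show False using one by simp
  qed
  fix v w assume vw: "v \<in> carrier H" "w \<in> carrier H" "u \<otimes>\<^bsub>H\<^esub> v = \<one>\<^bsub>H\<^esub>" "u \<otimes>\<^bsub>H\<^esub> w = \<one>\<^bsub>H\<^esub>"
  have e: "u \<otimes>\<^bsub>H\<^esub> v = u \<otimes>\<^bsub>H\<^esub> w" using vw(3,4) by (rule trans[OF _ sym])
  show "v = w" by (rule lin_inj[OF ls mv lin uc unz vw(1) vw(2) e])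
qed

lemma infinite_multiples:
  assumes "finite W" "(w::int) \<noteq> 0" "\<And>j::nat. (int j + 1) * w \<in> W"
  shows False
proof -
  have "range (\<lambda>j::nat. (int j + 1) * w) \<subseteq> W" using assms(3) by auto
  then have "finite (range (\<lambda>j::nat. (int j + 1) * w))" using assms(1) finite_subset by blast
  moreover have "inj (\<lambda>j::nat. (int j + 1) * w)" using assms(2) by (auto simp: inj_def)
  ultimately have "finite (UNIV :: nat set)" using finite_imageD by blast
  then show False by simp
qed

lemma series_main:
  fixes H :: "(int \<Rightarrow> 'a::division_ring) ring"
  assumes ls: "lstruct H"
   and mv: "\<And>f g a b. f \<in> carrier H \<Longrightarrow> g \<in> carrier H \<Longrightarrow> isval f a \<Longrightarrow> isval g b \<Longrightarrow> isval (f \<otimes>\<^bsub>H\<^esub> g) (a+b)"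
   and mc: "\<And>f g. f \<in> carrier H \<Longrightarrow> g \<in> carrier H \<Longrightarrow> f \<otimes>\<^bsub>H\<^esub> g \<in> carrier H"
   and x: "x \<in> carrier H" "x \<notin> range const_series"
   and fin: "finite W" "\<And>y w. y \<in> gen_subfield H const_series x \<Longrightarrow> y \<in> carrier H \<Longrightarrow> isval y w \<Longrightarrow> w \<in> W"
  shows False
proof -
  have c: "carrier H = laurent_carrier" and z: "zero H = (\<lambda>i. 0)" and ad: "add H = (\<lambda>f g i. f i + g i)"
    using ls unfolding lstruct_def by auto
  have xnz: "x \<noteq> (\<lambda>i. 0)"
  proof
    assume "x = (\<lambda>i. 0)"
    then have "x = const_series 0" unfolding const_series_def by auto
    then show False using x(2) by auto
  qed
  obtain v where v: "isval x v" using isval_exists x(1) xnz c by auto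
  have "\<exists>y w. y \<in> gen_subfield H const_series x \<and> y \<in> carrier H \<and> isval y w \<and> w \<noteq> 0"
  proof (cases "v = 0")
    case False
    have "x \<in> gen_subfield H const_series x" by (rule gen_subfield.gen)
    then show ?thesis using v x(1) False by blast
  next
    case True
    define y where "y = x \<oplus>\<^bsub>H\<^esub> \<ominus>\<^bsub>H\<^esub> const_series (x 0)"
    have yg: "y \<in> gen_subfield H const_series x" unfolding y_def
      by (intro gen_subfield.add gen_subfield.gen gen_subfield.neg gen_subfield.base)
    have nn: "\<ominus>\<^bsub>H\<^esub> const_series (x 0) = (\<lambda>i. - const_series (x 0) i)"
      by (rule lstruct_neg[OF ls]) (simp add: c laurent_const)
    have ye: "y = (\<lambda>i. x i - const_series (x 0) i)"
      unfolding y_def nn by (simp add: ad)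
    have yc: "y \<in> carrier H" unfolding ye using laurent_diff laurent_const x(1) c by auto
    have ynz: "y \<noteq> (\<lambda>i. 0)"
    proof
      assume "y = (\<lambda>i. 0)"
      then have h: "\<And>i. x i = const_series (x 0) i" unfolding ye by (metis right_minus_eq)
      have "x = const_series (x 0)" by (rule ext) (rule h)
      then show False using x(2) by auto
    qed
    obtain w where w: "isval y w" using isval_exists yc ynz c by auto
    have "w \<noteq> 0"
    proof
      assume "w = 0"
      then have "y 0 \<noteq> 0" using w unfolding isval_def by auto
      then show False unfolding ye const_series_def by simp
    qed
    then show ?thesis using yg yc w by blast
  qed
  then obtain y w where y: "y \<in> gen_subfield H const_series x" "y \<in> carrier H" "isval y w" "w \<noteq> 0" by blast
  define pw where "pw = (\<lambda>j. ((\<lambda>z. y \<otimes>\<^bsub>H\<^esub> z) ^^ j) y)"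
  have pw: "pw j \<in> gen_subfield H const_series x \<and> pw j \<in> carrier H \<and> isval (pw j) ((int j + 1) * w)" for j
  proof (induction j)
    case 0 then show ?case using y by (simp add: pw_def)
  next
    case (Suc j)
    have e: "pw (Suc j) = y \<otimes>\<^bsub>H\<^esub> pw j" unfolding pw_def by simp
    have "isval (pw (Suc j)) (w + (int j + 1) * w)" unfolding e using mv y Suc by blast
    moreover have "w + (int j + 1) * w = (int (Suc j) + 1) * w" by (simp add: algebra_simps)
    ultimately show ?case unfolding e using Suc y mc gen_subfield.mult by auto
  qed
  show False by (rule infinite_multiples[OF fin(1) y(4)]) (use pw fin(2) in blast)
qed


section \<open>The series field k((t,sigma))\<close>

lemma spow_facts:
  fixes \<sigma> :: "'a::division_ring \<Rightarrow> 'a"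
  assumes "ring_automorphism \<sigma>"
  shows "spow \<sigma> i 0 = 0" "(spow \<sigma> i a = 0) = (a = 0)" "spow \<sigma> i (a - b) = spow \<sigma> i a - spow \<sigma> i b"
    "spow \<sigma> 0 a = a"
  using ra_basic[OF ra_spow[OF assms, of i]] by (auto simp: spow_def)

lemma t_struct: "lstruct (skew_series_t \<sigma>)"
  by (simp add: lstruct_def skew_series_t_def)

lemma t_mult: "f \<otimes>\<^bsub>skew_series_t \<sigma>\<^esub> g = (\<lambda>m. \<Sum>i | f i \<noteq> 0 \<and> g (m - i) \<noteq> 0. f i * spow \<sigma> i (g (m - i)))"
  by (simp add: skew_series_t_def)

lemma t_carrier: "carrier (skew_series_t \<sigma>) = laurent_carrier"
  by (simp add: skew_series_t_def)

lemma t_const_mult: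
  fixes \<sigma> :: "'a::division_ring \<Rightarrow> 'a"
  assumes sa: "ring_automorphism \<sigma>"
  shows "const_series c \<otimes>\<^bsub>skew_series_t \<sigma>\<^esub> f = (\<lambda>m. c * f m)"
proof
  fix m
  have A: "{i. const_series c i \<noteq> 0 \<and> f (m - i) \<noteq> 0} = (if c \<noteq> 0 \<and> f m \<noteq> 0 then {0} else {})"
    by (auto simp: const_series_def split: if_splits)
  show "(const_series c \<otimes>\<^bsub>skew_series_t \<sigma>\<^esub> f) m = c * f m"
    unfolding t_mult A by (auto simp: const_series_def spow_facts[OF sa])
qed

lemma t_mv:
  fixes \<sigma> :: "'a::division_ring \<Rightarrow> 'a"
  assumes sa: "ring_automorphism \<sigma>" and f: "isval f a" and g: "isval g b"
  shows "isval (f \<otimes>\<^bsub>skew_series_t \<sigma>\<^esub> g) (a + b)"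
proof -
  have A: "{i. f i \<noteq> 0 \<and> g (a + b - i) \<noteq> 0} = {a}"
  proof (intro equalityI subsetI)
    fix i assume i: "i \<in> {i. f i \<noteq> 0 \<and> g (a + b - i) \<noteq> 0}"
    have "\<not> i < a" using i f unfolding isval_def by auto
    moreover have "\<not> a + b - i < b" using i g unfolding isval_def by auto
    ultimately show "i \<in> {a}" by simp
  qed (use f g in \<open>auto simp: isval_def\<close>)
  have B: "{i. f i \<noteq> 0 \<and> g (m - i) \<noteq> 0} = {}" if m: "m < a + b" for m
  proof -
    have "\<not> (f i \<noteq> 0 \<and> g (m - i) \<noteq> 0)" for i
    proof (cases "i < a")
      case True then show ?thesis using f unfolding isval_def by auto
    next
      case False then have "m - i < b" using m by simp
      then show ?thesis using g unfolding isval_def by auto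
    qed
    then show ?thesis by auto
  qed
  have nz: "f a * spow \<sigma> a (g b) \<noteq> 0" using f g spow_facts(2)[OF sa] unfolding isval_def by auto
  show ?thesis unfolding isval_def
  proof (intro conjI allI impI)
    show "(f \<otimes>\<^bsub>skew_series_t \<sigma>\<^esub> g) (a + b) \<noteq> 0" unfolding t_mult A using nz by simp
    fix m assume m: "m < a + b"
    have "(f \<otimes>\<^bsub>skew_series_t \<sigma>\<^esub> g) m = (\<Sum>i | f i \<noteq> 0 \<and> g (m - i) \<noteq> 0. f i * spow \<sigma> i (g (m - i)))"
      by (simp only: t_mult)
    also have "\<dots> = 0" unfolding B[OF m] by simp
    finally show "(f \<otimes>\<^bsub>skew_series_t \<sigma>\<^esub> g) m = 0" .
  qed
qed

lemma t_formula:
  fixes \<sigma> :: "'a::division_ring \<Rightarrow> 'a"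
  assumes sa: "ring_automorphism \<sigma>" and f: "\<And>i. i < nf \<Longrightarrow> f i = 0" and g: "\<And>i. i < ng \<Longrightarrow> g i = 0"
  shows "(f \<otimes>\<^bsub>skew_series_t \<sigma>\<^esub> g) m = (\<Sum>i\<in>{nf..m - ng}. f i * spow \<sigma> i (g (m - i)))"
proof -
  have sub: "{i. f i \<noteq> 0 \<and> g (m - i) \<noteq> 0} \<subseteq> {nf..m - ng}"
  proof
    fix i assume i: "i \<in> {i. f i \<noteq> 0 \<and> g (m - i) \<noteq> 0}"
    then have "\<not> i < nf" "\<not> m - i < ng" using f g by auto
    then show "i \<in> {nf..m - ng}" by simp
  qed
  have "(\<Sum>i\<in>{nf..m - ng}. f i * spow \<sigma> i (g (m - i))) = (\<Sum>i | f i \<noteq> 0 \<and> g (m - i) \<noteq> 0. f i * spow \<sigma> i (g (m - i)))"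
    by (rule sum.mono_neutral_right[OF _ sub]) (auto simp: spow_facts[OF sa])
  then show ?thesis unfolding t_mult by simp
qed

lemma t_lin:
  fixes \<sigma> :: "'a::division_ring \<Rightarrow> 'a"
  assumes sa: "ring_automorphism \<sigma>" and u: "u \<in> laurent_carrier" and v: "v \<in> laurent_carrier" and w: "w \<in> laurent_carrier"
  shows "u \<otimes>\<^bsub>skew_series_t \<sigma>\<^esub> (\<lambda>i. v i - w i) = (\<lambda>m. (u \<otimes>\<^bsub>skew_series_t \<sigma>\<^esub> v) m - (u \<otimes>\<^bsub>skew_series_t \<sigma>\<^esub> w) m)"
proof
  fix m
  obtain nu where nu: "\<And>i. i < nu \<Longrightarrow> u i = 0" using u unfolding laurent_carrier_def by auto
  obtain nv where nv: "\<And>i. i < nv \<Longrightarrow> v i = 0" using v unfolding laurent_carrier_def by auto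
  obtain nw where nw: "\<And>i. i < nw \<Longrightarrow> w i = 0" using w unfolding laurent_carrier_def by auto
  define n where "n = min nv nw"
  have v': "\<And>i. i < n \<Longrightarrow> v i = 0" and w': "\<And>i. i < n \<Longrightarrow> w i = 0" using nv nw unfolding n_def by auto
  have d': "\<And>i. i < n \<Longrightarrow> v i - w i = 0" using v' w' by simp
  show "(u \<otimes>\<^bsub>skew_series_t \<sigma>\<^esub> (\<lambda>i. v i - w i)) m = (u \<otimes>\<^bsub>skew_series_t \<sigma>\<^esub> v) m - (u \<otimes>\<^bsub>skew_series_t \<sigma>\<^esub> w) m"
  proof -
    have e1: "(u \<otimes>\<^bsub>skew_series_t \<sigma>\<^esub> (\<lambda>i. v i - w i)) m = (\<Sum>i\<in>{nu..m - n}. u i * spow \<sigma> i (v (m - i) - w (m - i)))"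
    proof (rule t_formula[OF sa, where nf=nu and f=u and ng=n and g="\<lambda>i. v i - w i"])
      fix i assume "i < nu" then show "u i = 0" by (rule nu)
    next
      fix i assume "i < n" then show "v i - w i = 0" by (rule d')
    qed
    have e2: "(u \<otimes>\<^bsub>skew_series_t \<sigma>\<^esub> v) m = (\<Sum>i\<in>{nu..m - n}. u i * spow \<sigma> i (v (m - i)))"
      by (rule t_formula[OF sa nu v'])
    have e3: "(u \<otimes>\<^bsub>skew_series_t \<sigma>\<^esub> w) m = (\<Sum>i\<in>{nu..m - n}. u i * spow \<sigma> i (w (m - i)))"
      by (rule t_formula[OF sa nu w'])
    show ?thesis unfolding e1 e2 e3
      by (simp add: spow_facts[OF sa] right_diff_distrib sum_subtractf)
  qed
qed

lemma t_mc:
  fixes \<sigma> :: "'a::division_ring \<Rightarrow> 'a"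
  assumes f: "f \<in> laurent_carrier" and g: "g \<in> laurent_carrier"
  shows "f \<otimes>\<^bsub>skew_series_t \<sigma>\<^esub> g \<in> laurent_carrier"
proof -
  obtain nf where nf: "\<And>i. i < nf \<Longrightarrow> f i = 0" using f unfolding laurent_carrier_def by auto
  obtain ng where ng: "\<And>i. i < ng \<Longrightarrow> g i = 0" using g unfolding laurent_carrier_def by auto
  have "(f \<otimes>\<^bsub>skew_series_t \<sigma>\<^esub> g) m = 0" if m: "m < nf + ng" for m
  proof -
    have E: "{i. f i \<noteq> 0 \<and> g (m - i) \<noteq> 0} = {}"
    proof -
      have "\<not> (f i \<noteq> 0 \<and> g (m - i) \<noteq> 0)" for i
      proof (cases "i < nf")
        case True then show ?thesis using nf by auto
      next
        case False then have "m - i < ng" using m by simp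
        then show ?thesis using ng by auto
      qed
      then show ?thesis by auto
    qed
    have "(f \<otimes>\<^bsub>skew_series_t \<sigma>\<^esub> g) m = (\<Sum>i | f i \<noteq> 0 \<and> g (m - i) \<noteq> 0. f i * spow \<sigma> i (g (m - i)))"
      by (simp only: t_mult)
    also have "\<dots> = 0" unfolding E by simp
    finally show ?thesis .
  qed
  then show ?thesis unfolding laurent_carrier_def by blast
qed

lemma t_zl: "(\<lambda>i. 0) \<otimes>\<^bsub>skew_series_t \<sigma>\<^esub> g = (\<lambda>i. (0::'a::division_ring))"
  unfolding t_mult by simp

lemma part_t:
  fixes \<sigma> :: "'a::division_ring \<Rightarrow> 'a"
  assumes sa: "ring_automorphism \<sigma>"
  shows "regular_ext (skew_series_t \<sigma>) const_series"
  unfolding regular_ext_def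
proof (intro ballI impI)
  let ?T = "skew_series_t \<sigma>"
  fix x assume x: "x \<in> carrier ?T" and alg: "algebraic_over ?T const_series x"
  show "x \<in> range const_series"
  proof (rule ccontr)
    assume xn: "x \<notin> range const_series"
    have ls: "lstruct ?T" by (rule t_struct)
    interpret abelian_group ?T by (rule lstruct_group[OF ls])
    have mv: "\<And>f g a b. f \<in> carrier ?T \<Longrightarrow> g \<in> carrier ?T \<Longrightarrow> isval f a \<Longrightarrow> isval g b \<Longrightarrow> isval (f \<otimes>\<^bsub>?T\<^esub> g) (a+b)"
      using t_mv[OF sa] by blast
    have mc: "\<And>f g. f \<in> carrier ?T \<Longrightarrow> g \<in> carrier ?T \<Longrightarrow> f \<otimes>\<^bsub>?T\<^esub> g \<in> carrier ?T"
      using t_mc unfolding t_carrier by blast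
    have lin: "\<And>u v w. u \<in> carrier ?T \<Longrightarrow> v \<in> carrier ?T \<Longrightarrow> w \<in> carrier ?T \<Longrightarrow>
        u \<otimes>\<^bsub>?T\<^esub> (\<lambda>i. v i - w i) = (\<lambda>m. (u \<otimes>\<^bsub>?T\<^esub> v) m - (u \<otimes>\<^bsub>?T\<^esub> w) m)"
      using t_lin[OF sa] unfolding t_carrier by blast
    have zl: "\<And>g. g \<in> carrier ?T \<Longrightarrow> (\<lambda>i. 0) \<otimes>\<^bsub>?T\<^esub> g = (\<lambda>i. 0)" using t_zl by blast
    have one: "\<one>\<^bsub>?T\<^esub> \<noteq> (\<lambda>i. 0)" by (simp add: skew_series_t_def fun_eq_iff)
    have sub: "gen_subfield ?T const_series x \<subseteq> carrier ?T"
    proof (rule gen_sub_carrier)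
      show "\<And>a. const_series a \<in> carrier ?T" using laurent_const t_carrier by blast
      show "x \<in> carrier ?T" by (fact x)
      show "\<And>u v. u \<in> carrier ?T \<Longrightarrow> v \<in> carrier ?T \<Longrightarrow> u \<oplus>\<^bsub>?T\<^esub> v \<in> carrier ?T" by (rule a_closed)
      show "\<And>u. u \<in> carrier ?T \<Longrightarrow> \<ominus>\<^bsub>?T\<^esub> u \<in> carrier ?T" by (rule a_inv_closed)
      show "\<And>u v. u \<in> carrier ?T \<Longrightarrow> v \<in> carrier ?T \<Longrightarrow> u \<otimes>\<^bsub>?T\<^esub> v \<in> carrier ?T" by (rule mc)
      show "\<And>u. u \<in> Units ?T \<Longrightarrow> inv\<^bsub>?T\<^esub> u \<in> carrier ?T"
        by (rule series_inv_carrier[OF ls mv lin zl one])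
    qed
    obtain S where S: "finite S" "S \<subseteq> gen_subfield ?T const_series x"
      "\<forall>y\<in>gen_subfield ?T const_series x. \<exists>c. y = (\<Oplus>\<^bsub>?T\<^esub> s\<in>S. const_series (c s) \<otimes>\<^bsub>?T\<^esub> s)"
      using alg unfolding algebraic_over_def fin_dim_left_def by blast
    have Sc: "S \<subseteq> laurent_carrier" using S(2) sub t_carrier by blast
    show False
    proof (rule series_main[OF ls mv mc x xn VSL_finite[OF S(1)]])
      fix y w assume y: "y \<in> gen_subfield ?T const_series x" "y \<in> carrier ?T" "isval y w"
      obtain c where c: "y = (\<Oplus>\<^bsub>?T\<^esub> s\<in>S. const_series (c s) \<otimes>\<^bsub>?T\<^esub> s)" using S(3) y(1) by blast
      have "(\<lambda>s. const_series (c s) \<otimes>\<^bsub>?T\<^esub> s) \<in> S \<rightarrow> carrier ?T"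
        using Sc laurent_scale unfolding t_const_mult[OF sa] t_carrier by blast
      then have "y = (\<lambda>i. \<Sum>s\<in>S. (const_series (c s) \<otimes>\<^bsub>?T\<^esub> s) i)"
        using c lstruct_finsum[OF ls S(1)] by simp
      also have "\<dots> = lcombL c S" unfolding lcombL_def t_const_mult[OF sa] by simp
      finally show "w \<in> VSL S" using y(3) unfolding VSL_def by blast
    qed
  qed
qed


section \<open>The series field k_{sigma,delta}((z))\<close>

lemma sd_zero:
  assumes "sigma_derivation \<sigma> \<delta>" shows "\<delta> 0 = 0"
proof -
  have "\<delta> (0 + 0) = \<delta> 0 + \<delta> 0" using assms unfolding sigma_derivation_def by blast
  then show ?thesis by simp
qed

lemma sd_pow_zero:
  assumes "sigma_derivation \<sigma> \<delta>" shows "(\<delta> ^^ k) 0 = 0"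
  by (induction k) (simp_all add: sd_zero[OF assms])

lemma zpos_low: "l < int n \<Longrightarrow> zpos \<sigma> \<delta> n a l = 0"
  by (cases n) auto

lemma zpos_diag:
  shows "zpos \<sigma> \<delta> n a (int n) = (\<sigma> ^^ n) a"
proof (induction n)
  case 0 then show ?case by simp
next
  case (Suc n)
  have "{1..nat (int (Suc n) - int n)} = {1::nat}" by simp
  then show ?case using Suc by simp
qed

lemma zpos_zero:
  assumes sa: "ring_automorphism \<sigma>" and sd: "sigma_derivation \<sigma> \<delta>"
  shows "zpos \<sigma> \<delta> n 0 l = 0"
proof (induction n arbitrary: l)
  case 0 then show ?case by simp
next
  case (Suc n)
  then show ?case by (simp add: sd_pow_zero[OF sd] ra_basic(1)[OF sa])
qed

lemma zneg_low:
  assumes sa: "ring_automorphism \<sigma>" and sd: "sigma_derivation \<sigma> \<delta>"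
  shows "l < - int n \<Longrightarrow> zneg \<sigma> \<delta> n a l = 0"
proof (induction n arbitrary: l)
  case 0 then show ?case by simp
next
  case (Suc n)
  have "zneg \<sigma> \<delta> n a (l + 1) = 0" "zneg \<sigma> \<delta> n a l = 0" using Suc by auto
  then show ?case by (simp add: sd_zero[OF sd] ra_basic(1)[OF ra_inv[OF sa]])
qed

lemma zneg_diag:
  assumes sa: "ring_automorphism \<sigma>" and sd: "sigma_derivation \<sigma> \<delta>"
  shows "zneg \<sigma> \<delta> n a (- int n) = (inv_into UNIV \<sigma> ^^ n) a"
proof (induction n)
  case 0 then show ?case by simp
next
  case (Suc n)
  have e1: "- int (Suc n) + 1 = - int n" by simp
  have "zneg \<sigma> \<delta> n a (- int (Suc n)) = 0" by (rule zneg_low[OF sa sd]) simp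
  then show ?case using Suc e1 by (simp add: sd_zero[OF sd] ra_basic(1)[OF ra_inv[OF sa]])
qed

lemma zneg_zero:
  assumes sa: "ring_automorphism \<sigma>" and sd: "sigma_derivation \<sigma> \<delta>"
  shows "zneg \<sigma> \<delta> n 0 l = 0"
proof (induction n arbitrary: l)
  case 0 then show ?case by simp
next
  case (Suc n)
  then show ?case by (simp add: sd_zero[OF sd] ra_basic(1)[OF ra_inv[OF sa]])
qed

lemma zc_low:
  assumes sa: "ring_automorphism \<sigma>" and sd: "sigma_derivation \<sigma> \<delta>"
  shows "l < j \<Longrightarrow> zcoeff \<sigma> \<delta> a j l = 0"
  unfolding zcoeff_def using zpos_low[of l "nat j"] zneg_low[OF sa sd, of l "nat (- j)"] by auto

lemma zc_zero:
  assumes sa: "ring_automorphism \<sigma>" and sd: "sigma_derivation \<sigma> \<delta>"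
  shows "zcoeff \<sigma> \<delta> 0 j l = 0"
  unfolding zcoeff_def using zpos_zero[OF sa sd] zneg_zero[OF sa sd] by auto

lemma zc_0: "zcoeff \<sigma> \<delta> a 0 l = (if l = 0 then a else 0)"
  unfolding zcoeff_def by simp

lemma zc_diag:
  assumes sa: "ring_automorphism \<sigma>" and sd: "sigma_derivation \<sigma> \<delta>" and a: "a \<noteq> 0"
  shows "zcoeff \<sigma> \<delta> a j j \<noteq> 0"
proof (cases "0 \<le> j")
  case True
  then have "zcoeff \<sigma> \<delta> a j j = (\<sigma> ^^ nat j) a" unfolding zcoeff_def using zpos_diag[of \<sigma> \<delta> "nat j" a] by simp
  then show ?thesis using ra_basic(4)[OF ra_pow[OF sa]] a by simp
next
  case False
  then have "zcoeff \<sigma> \<delta> a j j = (inv_into UNIV \<sigma> ^^ nat (- j)) a"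
    unfolding zcoeff_def using zneg_diag[OF sa sd, of "nat (- j)" a] by simp
  then show ?thesis using ra_basic(4)[OF ra_pow[OF ra_inv[OF sa]]] a by simp
qed

lemma z_struct: "lstruct (skew_series_z \<sigma> \<delta>)"
  by (simp add: lstruct_def skew_series_z_def)

lemma z_carrier: "carrier (skew_series_z \<sigma> \<delta>) = laurent_carrier"
  by (simp add: skew_series_z_def)

lemma z_mult: "s \<otimes>\<^bsub>skew_series_z \<sigma> \<delta>\<^esub> r = (\<lambda>m. \<Sum>p\<in>{(i, j). s i \<noteq> 0 \<and> r j \<noteq> 0 \<and> i + j \<le> m}.
                zcoeff \<sigma> \<delta> (s (fst p)) (snd p) (m - fst p) * r (snd p))"
  by (simp add: skew_series_z_def)

lemma z_empty:
  assumes s: "\<And>i. i < ns \<Longrightarrow> s i = 0" and r: "\<And>i. i < nr \<Longrightarrow> r i = 0" and m: "m < ns + nr"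
  shows "(s \<otimes>\<^bsub>skew_series_z \<sigma> \<delta>\<^esub> r) m = 0"
proof -
  have E: "{(i, j). s i \<noteq> 0 \<and> r j \<noteq> 0 \<and> i + j \<le> m} = {}"
  proof -
    have "\<not> (s i \<noteq> 0 \<and> r j \<noteq> 0 \<and> i + j \<le> m)" for i j
    proof (cases "i < ns")
      case True then show ?thesis using s by auto
    next
      case False
      show ?thesis
      proof (cases "j < nr")
        case True then show ?thesis using r by auto
      next
        case False then show ?thesis using \<open>\<not> i < ns\<close> m by auto
      qed
    qed
    then show ?thesis by auto
  qed
  have "(s \<otimes>\<^bsub>skew_series_z \<sigma> \<delta>\<^esub> r) m = (\<Sum>p\<in>{(i, j). s i \<noteq> 0 \<and> r j \<noteq> 0 \<and> i + j \<le> m}.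
                zcoeff \<sigma> \<delta> (s (fst p)) (snd p) (m - fst p) * r (snd p))"
    by (simp only: z_mult)
  also have "\<dots> = 0" unfolding E by simp
  finally show ?thesis .
qed

lemma z_mc:
  assumes f: "f \<in> laurent_carrier" and g: "g \<in> laurent_carrier"
  shows "f \<otimes>\<^bsub>skew_series_z \<sigma> \<delta>\<^esub> g \<in> laurent_carrier"
proof -
  obtain nf where nf: "\<And>i. i < nf \<Longrightarrow> f i = 0" using f unfolding laurent_carrier_def by auto
  obtain ng where ng: "\<And>i. i < ng \<Longrightarrow> g i = 0" using g unfolding laurent_carrier_def by auto
  have "\<forall>m < nf + ng. (f \<otimes>\<^bsub>skew_series_z \<sigma> \<delta>\<^esub> g) m = 0" using z_empty[where s=f and r=g and ns=nf and nr=ng, OF nf ng] by blast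
  then show ?thesis unfolding laurent_carrier_def by blast
qed

lemma z_zl: "(\<lambda>i. 0) \<otimes>\<^bsub>skew_series_z \<sigma> \<delta>\<^esub> g = (\<lambda>i. (0::'a::division_ring))"
  unfolding z_mult by simp

lemma z_mv:
  assumes sa: "ring_automorphism \<sigma>" and sd: "sigma_derivation \<sigma> \<delta>" and f: "isval f a" and g: "isval g b"
  shows "isval (f \<otimes>\<^bsub>skew_series_z \<sigma> \<delta>\<^esub> g) (a + b)"
  unfolding isval_def
proof (intro conjI allI impI)
  have f0: "\<And>i. i < a \<Longrightarrow> f i = 0" and g0: "\<And>i. i < b \<Longrightarrow> g i = 0" using f g unfolding isval_def by auto
  fix m assume m: "m < a + b"
  show "(f \<otimes>\<^bsub>skew_series_z \<sigma> \<delta>\<^esub> g) m = 0"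
    using f0 g0 m by (intro z_empty[where s=f and r=g and ns=a and nr=b]) auto
next
  have A: "{(i, j). f i \<noteq> 0 \<and> g j \<noteq> 0 \<and> i + j \<le> a + b} = {(a, b)}"
  proof (intro equalityI subsetI)
    fix p assume p: "p \<in> {(i, j). f i \<noteq> 0 \<and> g j \<noteq> 0 \<and> i + j \<le> a + b}"
    obtain i j where ij: "p = (i, j)" by fastforce
    have "\<not> i < a" "\<not> j < b" using p f g unfolding ij isval_def by auto
    then show "p \<in> {(a, b)}" using p unfolding ij by auto
  qed (use f g in \<open>auto simp: isval_def\<close>)
  have nz: "zcoeff \<sigma> \<delta> (f a) b b * g b \<noteq> 0"
    using zc_diag[OF sa sd, of "f a" b] f g unfolding isval_def by auto
  have "(f \<otimes>\<^bsub>skew_series_z \<sigma> \<delta>\<^esub> g) (a + b) = (\<Sum>p\<in>{(i, j). f i \<noteq> 0 \<and> g j \<noteq> 0 \<and> i + j \<le> a + b}.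
                zcoeff \<sigma> \<delta> (f (fst p)) (snd p) (a + b - fst p) * g (snd p))"
    by (simp only: z_mult)
  also have "\<dots> = zcoeff \<sigma> \<delta> (f a) b b * g b" unfolding A by simp
  finally show "(f \<otimes>\<^bsub>skew_series_z \<sigma> \<delta>\<^esub> g) (a + b) \<noteq> 0" using nz by simp
qed

lemma z_formula:
  assumes sa: "ring_automorphism \<sigma>" and sd: "sigma_derivation \<sigma> \<delta>"
    and s: "\<And>i. i < ns \<Longrightarrow> s i = 0" and r: "\<And>i. i < nr \<Longrightarrow> r i = 0"
  shows "(s \<otimes>\<^bsub>skew_series_z \<sigma> \<delta>\<^esub> r) m = (\<Sum>p\<in>{ns..m - nr} \<times> {nr..m - ns}.
                zcoeff \<sigma> \<delta> (s (fst p)) (snd p) (m - fst p) * r (snd p))"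
proof -
  have sub: "{(i, j). s i \<noteq> 0 \<and> r j \<noteq> 0 \<and> i + j \<le> m} \<subseteq> {ns..m - nr} \<times> {nr..m - ns}"
  proof
    fix p assume p: "p \<in> {(i, j). s i \<noteq> 0 \<and> r j \<noteq> 0 \<and> i + j \<le> m}"
    obtain i j where ij: "p = (i, j)" by fastforce
    have "\<not> i < ns" "\<not> j < nr" using p s r unfolding ij by auto
    then show "p \<in> {ns..m - nr} \<times> {nr..m - ns}" using p unfolding ij by auto
  qed
  have zero: "zcoeff \<sigma> \<delta> (s (fst p)) (snd p) (m - fst p) * r (snd p) = 0"
    if p: "p \<in> {ns..m - nr} \<times> {nr..m - ns} - {(i, j). s i \<noteq> 0 \<and> r j \<noteq> 0 \<and> i + j \<le> m}" for p
  proof -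
    obtain i j where ij: "p = (i, j)" by fastforce
    have "s i = 0 \<or> r j = 0 \<or> m - i < j" using p unfolding ij by auto
    then show ?thesis unfolding ij using zc_zero[OF sa sd] zc_low[OF sa sd] by auto
  qed
  have "(\<Sum>p\<in>{ns..m - nr} \<times> {nr..m - ns}. zcoeff \<sigma> \<delta> (s (fst p)) (snd p) (m - fst p) * r (snd p))
      = (\<Sum>p\<in>{(i, j). s i \<noteq> 0 \<and> r j \<noteq> 0 \<and> i + j \<le> m}. zcoeff \<sigma> \<delta> (s (fst p)) (snd p) (m - fst p) * r (snd p))"
    by (rule sum.mono_neutral_right[OF _ sub]) (use zero in auto)
  then show ?thesis by (simp only: z_mult)
qed

lemma z_lin:
  assumes sa: "ring_automorphism \<sigma>" and sd: "sigma_derivation \<sigma> \<delta>"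
    and u: "u \<in> laurent_carrier" and v: "v \<in> laurent_carrier" and w: "w \<in> laurent_carrier"
  shows "u \<otimes>\<^bsub>skew_series_z \<sigma> \<delta>\<^esub> (\<lambda>i. v i - w i) = (\<lambda>m. (u \<otimes>\<^bsub>skew_series_z \<sigma> \<delta>\<^esub> v) m - (u \<otimes>\<^bsub>skew_series_z \<sigma> \<delta>\<^esub> w) m)"
proof
  fix m
  obtain nu where nu: "\<And>i. i < nu \<Longrightarrow> u i = 0" using u unfolding laurent_carrier_def by auto
  obtain nv where nv: "\<And>i. i < nv \<Longrightarrow> v i = 0" using v unfolding laurent_carrier_def by auto
  obtain nw where nw: "\<And>i. i < nw \<Longrightarrow> w i = 0" using w unfolding laurent_carrier_def by auto
  define n where "n = min nv nw"
  have v': "\<And>i. i < n \<Longrightarrow> v i = 0" and w': "\<And>i. i < n \<Longrightarrow> w i = 0" using nv nw unfolding n_def by auto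
  have d': "\<And>i. i < n \<Longrightarrow> v i - w i = 0" using v' w' by simp
  have e1: "(u \<otimes>\<^bsub>skew_series_z \<sigma> \<delta>\<^esub> (\<lambda>i. v i - w i)) m = (\<Sum>p\<in>{nu..m - n} \<times> {n..m - nu}.
                zcoeff \<sigma> \<delta> (u (fst p)) (snd p) (m - fst p) * (v (snd p) - w (snd p)))"
  proof (rule z_formula[OF sa sd, where ns=nu and s=u and nr=n and r="\<lambda>i. v i - w i"])
    fix i assume "i < nu" then show "u i = 0" by (rule nu)
  next
    fix i assume "i < n" then show "v i - w i = 0" by (rule d')
  qed
  have e2: "(u \<otimes>\<^bsub>skew_series_z \<sigma> \<delta>\<^esub> v) m = (\<Sum>p\<in>{nu..m - n} \<times> {n..m - nu}.
                zcoeff \<sigma> \<delta> (u (fst p)) (snd p) (m - fst p) * v (snd p))"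
    by (rule z_formula[OF sa sd nu v'])
  have e3: "(u \<otimes>\<^bsub>skew_series_z \<sigma> \<delta>\<^esub> w) m = (\<Sum>p\<in>{nu..m - n} \<times> {n..m - nu}.
                zcoeff \<sigma> \<delta> (u (fst p)) (snd p) (m - fst p) * w (snd p))"
    by (rule z_formula[OF sa sd nu w'])
  show "(u \<otimes>\<^bsub>skew_series_z \<sigma> \<delta>\<^esub> (\<lambda>i. v i - w i)) m = (u \<otimes>\<^bsub>skew_series_z \<sigma> \<delta>\<^esub> v) m - (u \<otimes>\<^bsub>skew_series_z \<sigma> \<delta>\<^esub> w) m"
    unfolding e1 e2 e3 by (simp add: right_diff_distrib sum_subtractf)
qed

lemma z_const_mult:
  assumes sa: "ring_automorphism \<sigma>" and sd: "sigma_derivation \<sigma> \<delta>" and s: "s \<in> laurent_carrier"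
  shows "s \<otimes>\<^bsub>skew_series_z \<sigma> \<delta>\<^esub> const_series c = (\<lambda>m. s m * c)"
proof
  fix m
  obtain ns where ns: "\<And>i. i < ns \<Longrightarrow> s i = 0" using s unfolding laurent_carrier_def by auto
  have c0: "\<And>i. i < 0 \<Longrightarrow> const_series c i = 0" unfolding const_series_def by auto
  have "(s \<otimes>\<^bsub>skew_series_z \<sigma> \<delta>\<^esub> const_series c) m = (\<Sum>p\<in>{ns..m - 0} \<times> {0..m - ns}.
                zcoeff \<sigma> \<delta> (s (fst p)) (snd p) (m - fst p) * const_series c (snd p))"
    by (rule z_formula[OF sa sd ns c0])
  also have "\<dots> = (\<Sum>p\<in>{ns..m} \<times> {0..m - ns} \<inter> {(m, 0)}.
                zcoeff \<sigma> \<delta> (s (fst p)) (snd p) (m - fst p) * const_series c (snd p))"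
  proof (rule sum.mono_neutral_right)
    show "\<forall>p\<in>{ns..m - 0} \<times> {0..m - ns} - {ns..m} \<times> {0..m - ns} \<inter> {(m, 0)}.
       zcoeff \<sigma> \<delta> (s (fst p)) (snd p) (m - fst p) * const_series c (snd p) = 0"
    proof
      fix p assume p: "p \<in> {ns..m - 0} \<times> {0..m - ns} - {ns..m} \<times> {0..m - ns} \<inter> {(m, 0)}"
      obtain i j where ij: "p = (i, j)" by fastforce
      show "zcoeff \<sigma> \<delta> (s (fst p)) (snd p) (m - fst p) * const_series c (snd p) = 0"
      proof (cases "j = 0")
        case True
        then have "i \<noteq> m" using p unfolding ij by auto
        then show ?thesis unfolding ij using True by (simp add: zc_0)
      next
        case False then show ?thesis unfolding ij const_series_def by simp
      qed
    qed
  qed auto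
  also have "\<dots> = s m * c"
  proof (cases "ns \<le> m")
    case True
    then have "{ns..m} \<times> {0..m - ns} \<inter> {(m, 0)} = {(m, 0)}" by auto
    then show ?thesis by (simp add: zc_0 const_series_def)
  next
    case False
    then have "{ns..m} \<times> {0..m - ns} \<inter> {(m, 0)} = {}" by auto
    then show ?thesis using ns False by simp
  qed
  finally show "(s \<otimes>\<^bsub>skew_series_z \<sigma> \<delta>\<^esub> const_series c) m = s m * c" .
qed

lemma part_z:
  fixes \<sigma> \<delta> :: "'a::division_ring \<Rightarrow> 'a"
  assumes sa: "ring_automorphism \<sigma>" and sd: "sigma_derivation \<sigma> \<delta>"
  shows "regular_ext (skew_series_z \<sigma> \<delta>) const_series"
  unfolding regular_ext_def
proof (intro ballI impI)
  let ?T = "skew_series_z \<sigma> \<delta>"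
  fix x assume x: "x \<in> carrier ?T" and alg: "algebraic_over ?T const_series x"
  show "x \<in> range const_series"
  proof (rule ccontr)
    assume xn: "x \<notin> range const_series"
    have ls: "lstruct ?T" by (rule z_struct)
    interpret abelian_group ?T by (rule lstruct_group[OF ls])
    have mv: "\<And>f g a b. f \<in> carrier ?T \<Longrightarrow> g \<in> carrier ?T \<Longrightarrow> isval f a \<Longrightarrow> isval g b \<Longrightarrow> isval (f \<otimes>\<^bsub>?T\<^esub> g) (a+b)"
      using z_mv[OF sa sd] by blast
    have mc: "\<And>f g. f \<in> carrier ?T \<Longrightarrow> g \<in> carrier ?T \<Longrightarrow> f \<otimes>\<^bsub>?T\<^esub> g \<in> carrier ?T"
      using z_mc unfolding z_carrier by blast
    have lin: "\<And>u v w. u \<in> carrier ?T \<Longrightarrow> v \<in> carrier ?T \<Longrightarrow> w \<in> carrier ?T \<Longrightarrow>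
        u \<otimes>\<^bsub>?T\<^esub> (\<lambda>i. v i - w i) = (\<lambda>m. (u \<otimes>\<^bsub>?T\<^esub> v) m - (u \<otimes>\<^bsub>?T\<^esub> w) m)"
      using z_lin[OF sa sd] unfolding z_carrier by blast
    have zl: "\<And>g. g \<in> carrier ?T \<Longrightarrow> (\<lambda>i. 0) \<otimes>\<^bsub>?T\<^esub> g = (\<lambda>i. 0)" using z_zl by blast
    have one: "\<one>\<^bsub>?T\<^esub> \<noteq> (\<lambda>i. 0)" by (simp add: skew_series_z_def fun_eq_iff)
    have sub: "gen_subfield ?T const_series x \<subseteq> carrier ?T"
    proof (rule gen_sub_carrier)
      show "\<And>a. const_series a \<in> carrier ?T" using laurent_const z_carrier by blast
      show "x \<in> carrier ?T" by (fact x)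
      show "\<And>u v. u \<in> carrier ?T \<Longrightarrow> v \<in> carrier ?T \<Longrightarrow> u \<oplus>\<^bsub>?T\<^esub> v \<in> carrier ?T" by (rule a_closed)
      show "\<And>u. u \<in> carrier ?T \<Longrightarrow> \<ominus>\<^bsub>?T\<^esub> u \<in> carrier ?T" by (rule a_inv_closed)
      show "\<And>u v. u \<in> carrier ?T \<Longrightarrow> v \<in> carrier ?T \<Longrightarrow> u \<otimes>\<^bsub>?T\<^esub> v \<in> carrier ?T" by (rule mc)
      show "\<And>u. u \<in> Units ?T \<Longrightarrow> inv\<^bsub>?T\<^esub> u \<in> carrier ?T"
        by (rule series_inv_carrier[OF ls mv lin zl one])
    qed
    obtain S where S: "finite S" "S \<subseteq> gen_subfield ?T const_series x"
      "\<forall>y\<in>gen_subfield ?T const_series x. \<exists>c. y = (\<Oplus>\<^bsub>?T\<^esub> s\<in>S. s \<otimes>\<^bsub>?T\<^esub> const_series (c s))"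
      using alg unfolding algebraic_over_def fin_dim_right_def by blast
    have Sc: "S \<subseteq> laurent_carrier" using S(2) sub z_carrier by blast
    show False
    proof (rule series_main[OF ls mv mc x xn VSR_finite[OF S(1)]])
      fix y w assume y: "y \<in> gen_subfield ?T const_series x" "y \<in> carrier ?T" "isval y w"
      obtain c where c: "y = (\<Oplus>\<^bsub>?T\<^esub> s\<in>S. s \<otimes>\<^bsub>?T\<^esub> const_series (c s))" using S(3) y(1) by blast
      have e: "\<And>s. s \<in> S \<Longrightarrow> s \<otimes>\<^bsub>?T\<^esub> const_series (c s) = (\<lambda>m. s m * c s)"
        using z_const_mult[OF sa sd] Sc by blast
      have "(\<lambda>s. s \<otimes>\<^bsub>?T\<^esub> const_series (c s)) \<in> S \<rightarrow> carrier ?T"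
      proof
        fix s assume s: "s \<in> S"
        show "s \<otimes>\<^bsub>?T\<^esub> const_series (c s) \<in> carrier ?T"
          unfolding e[OF s] z_carrier using laurent_scale_r[of s "c s"] Sc s by blast
      qed
      then have "y = (\<lambda>i. \<Sum>s\<in>S. (s \<otimes>\<^bsub>?T\<^esub> const_series (c s)) i)"
        using c lstruct_finsum[OF ls S(1)] by simp
      also have "\<dots> = lcombR c S" unfolding lcombR_def using e by simp
      finally show "w \<in> VSR S" using y(3) unfolding VSR_def by blast
    qed
  qed
qed


section \<open>Ore polynomials\<close>

lemma p_mult: "f \<otimes>\<^bsub>ore_poly \<sigma> \<delta>\<^esub> g = (\<lambda>m. \<Sum>p\<in>{(i, j). f i \<noteq> 0 \<and> g j \<noteq> 0 \<and> j \<le> m}.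
                f (fst p) * tcoeff \<sigma> \<delta> (fst p) (g (snd p)) (m - snd p))"
  by (simp add: ore_poly_def)

lemma p_carrier: "carrier (ore_poly \<sigma> \<delta>) = {f. finite {i. f i \<noteq> 0}}"
  by (simp add: ore_poly_def)

lemma p_zero: "\<zero>\<^bsub>ore_poly \<sigma> \<delta>\<^esub> = (\<lambda>i. 0)"
  by (simp add: ore_poly_def)

lemma p_add: "f \<oplus>\<^bsub>ore_poly \<sigma> \<delta>\<^esub> g = (\<lambda>i. f i + g i)"
  by (simp add: ore_poly_def)

lemma p_one: "\<one>\<^bsub>ore_poly \<sigma> \<delta>\<^esub> = const_poly 1"
  by (simp add: ore_poly_def const_poly_def)

lemma tc_high:
  assumes sa: "ring_automorphism \<sigma>" and sd: "sigma_derivation \<sigma> \<delta>"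
  shows "i < l \<Longrightarrow> tcoeff \<sigma> \<delta> i b l = 0"
proof (induction i arbitrary: l)
  case 0 then show ?case by simp
next
  case (Suc i)
  have "tcoeff \<sigma> \<delta> i b (l - 1) = 0" "tcoeff \<sigma> \<delta> i b l = 0" using Suc by auto
  then show ?case using Suc.prems by (simp add: sd_zero[OF sd] ra_basic(1)[OF sa])
qed

lemma tc_diag:
  assumes sa: "ring_automorphism \<sigma>" and sd: "sigma_derivation \<sigma> \<delta>"
  shows "tcoeff \<sigma> \<delta> i b i = (\<sigma> ^^ i) b"
proof (induction i)
  case 0 then show ?case by simp
next
  case (Suc i)
  have "tcoeff \<sigma> \<delta> i b (Suc i) = 0" by (rule tc_high[OF sa sd]) simp
  then show ?case using Suc by (simp add: sd_zero[OF sd])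
qed

definition pdeg :: "(nat \<Rightarrow> 'a::zero) \<Rightarrow> nat" where
  "pdeg f = Max {i. f i \<noteq> 0}"

lemma pdeg_facts:
  assumes "finite {i. f i \<noteq> 0}" "f \<noteq> (\<lambda>i. 0)"
  shows "f (pdeg f) \<noteq> 0" "\<And>i. pdeg f < i \<Longrightarrow> f i = 0"
proof -
  have ne: "{i. f i \<noteq> 0} \<noteq> {}" using assms(2) by auto
  show "f (pdeg f) \<noteq> 0" unfolding pdeg_def using Max_in[OF assms(1) ne] by simp
  fix i assume "pdeg f < i"
  then show "f i = 0" unfolding pdeg_def using Max_ge[OF assms(1), of i] by force
qed

lemma pdeg_eq:
  assumes "finite {i. f i \<noteq> 0}" "f d \<noteq> 0" "\<And>i. d < i \<Longrightarrow> f i = 0"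
  shows "pdeg f = d"
  unfolding pdeg_def
proof (rule Max_eqI[OF assms(1)])
  show "\<And>y. y \<in> {i. f i \<noteq> 0} \<Longrightarrow> y \<le> d" using assms(3) by (meson mem_Collect_eq not_le)
  show "d \<in> {i. f i \<noteq> 0}" using assms(2) by simp
qed

lemma p_nz_bound:
  assumes sa: "ring_automorphism \<sigma>" and sd: "sigma_derivation \<sigma> \<delta>"
    and nz: "(f \<otimes>\<^bsub>ore_poly \<sigma> \<delta>\<^esub> g) m \<noteq> 0"
  shows "\<exists>i j. f i \<noteq> 0 \<and> g j \<noteq> 0 \<and> m \<le> i + j"
proof (rule ccontr)
  assume no: "\<not> (\<exists>i j. f i \<noteq> 0 \<and> g j \<noteq> 0 \<and> m \<le> i + j)"
  have "(\<Sum>p\<in>{(i, j). f i \<noteq> 0 \<and> g j \<noteq> 0 \<and> j \<le> m}. f (fst p) * tcoeff \<sigma> \<delta> (fst p) (g (snd p)) (m - snd p)) = 0"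
  proof (rule sum.neutral, rule ballI)
    fix p assume p: "p \<in> {(i, j). f i \<noteq> 0 \<and> g j \<noteq> 0 \<and> j \<le> m}"
    obtain i j where ij: "p = (i, j)" by fastforce
    have h: "f i \<noteq> 0" "g j \<noteq> 0" "j \<le> m" using p unfolding ij by auto
    then have "\<not> m \<le> i + j" using no by blast
    then have "i < m - j" using h by arith
    then show "f (fst p) * tcoeff \<sigma> \<delta> (fst p) (g (snd p)) (m - snd p) = 0"
      unfolding ij using tc_high[OF sa sd] by simp
  qed
  then show False using nz unfolding p_mult by simp
qed

lemma p_closed:
  assumes sa: "ring_automorphism \<sigma>" and sd: "sigma_derivation \<sigma> \<delta>"
    and f: "f \<in> carrier (ore_poly \<sigma> \<delta>)" and g: "g \<in> carrier (ore_poly \<sigma> \<delta>)"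
  shows "f \<otimes>\<^bsub>ore_poly \<sigma> \<delta>\<^esub> g \<in> carrier (ore_poly \<sigma> \<delta>)"
proof -
  have ff: "finite {i. f i \<noteq> 0}" and fg: "finite {i. g i \<noteq> 0}" using f g unfolding p_carrier by auto
  have "{m. (f \<otimes>\<^bsub>ore_poly \<sigma> \<delta>\<^esub> g) m \<noteq> 0} \<subseteq> {..Max {i. f i \<noteq> 0} + Max {i. g i \<noteq> 0}}"
  proof
    fix m assume "m \<in> {m. (f \<otimes>\<^bsub>ore_poly \<sigma> \<delta>\<^esub> g) m \<noteq> 0}"
    then obtain i j where ij: "f i \<noteq> 0" "g j \<noteq> 0" "m \<le> i + j" using p_nz_bound[OF sa sd] by blast
    have "i \<le> Max {i. f i \<noteq> 0}" using Max_ge[OF ff] ij by simp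
    moreover have "j \<le> Max {i. g i \<noteq> 0}" using Max_ge[OF fg] ij by simp
    ultimately show "m \<in> {..Max {i. f i \<noteq> 0} + Max {i. g i \<noteq> 0}}" using ij by simp
  qed
  then show ?thesis unfolding p_carrier using finite_subset by blast
qed

lemma p_deg:
  assumes sa: "ring_automorphism \<sigma>" and sd: "sigma_derivation \<sigma> \<delta>"
    and f: "f \<in> carrier (ore_poly \<sigma> \<delta>)" and g: "g \<in> carrier (ore_poly \<sigma> \<delta>)"
    and fnz: "f \<noteq> (\<lambda>i. 0)" and gnz: "g \<noteq> (\<lambda>i. 0)"
  shows "f \<otimes>\<^bsub>ore_poly \<sigma> \<delta>\<^esub> g \<noteq> (\<lambda>i. 0)" "pdeg (f \<otimes>\<^bsub>ore_poly \<sigma> \<delta>\<^esub> g) = pdeg f + pdeg g"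
proof -
  have ff: "finite {i. f i \<noteq> 0}" and fg: "finite {i. g i \<noteq> 0}" using f g unfolding p_carrier by auto
  define df where "df = pdeg f"
  define dg where "dg = pdeg g"
  have f1: "f df \<noteq> 0" and f2: "\<And>i. df < i \<Longrightarrow> f i = 0" using pdeg_facts[OF ff fnz] unfolding df_def by auto
  have g1: "g dg \<noteq> 0" and g2: "\<And>i. dg < i \<Longrightarrow> g i = 0" using pdeg_facts[OF fg gnz] unfolding dg_def by auto
  have f3: "\<And>i. f i \<noteq> 0 \<Longrightarrow> i \<le> df" using f2 by (metis not_le)
  have g3: "\<And>i. g i \<noteq> 0 \<Longrightarrow> i \<le> dg" using g2 by (metis not_le)
  define M where "M = df + dg"
  define A where "A = {(i, j). f i \<noteq> 0 \<and> g j \<noteq> 0 \<and> j \<le> M}"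
  define F where "F = (\<lambda>p. f (fst p) * tcoeff \<sigma> \<delta> (fst p) (g (snd p)) (M - snd p))"
  have Afin: "finite A"
  proof (rule finite_subset)
    show "A \<subseteq> {i. f i \<noteq> 0} \<times> {i. g i \<noteq> 0}" unfolding A_def by auto
  qed (use ff fg in auto)
  have S1: "(f \<otimes>\<^bsub>ore_poly \<sigma> \<delta>\<^esub> g) M = sum F A" by (simp only: p_mult A_def F_def)
  have S2: "sum F A = sum F (A \<inter> {(df, dg)})"
  proof (rule sum.mono_neutral_right[OF Afin])
    show "\<forall>p\<in>A - A \<inter> {(df, dg)}. F p = 0"
    proof
      fix p assume p: "p \<in> A - A \<inter> {(df, dg)}"
      obtain i j where ij: "p = (i, j)" by fastforce
      have h: "f i \<noteq> 0" "g j \<noteq> 0" "j \<le> M" "(i, j) \<noteq> (df, dg)" using p unfolding ij A_def by auto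
      have "i \<le> df" "j \<le> dg" using f3 g3 h by auto
      then have "i < M - j" using h unfolding M_def by auto
      then show "F p = 0" unfolding ij F_def using tc_high[OF sa sd] by simp
    qed
  qed auto
  have S3: "A \<inter> {(df, dg)} = {(df, dg)}" unfolding A_def M_def using f1 g1 by auto
  have S4: "F (df, dg) = f df * (\<sigma> ^^ df) (g dg)"
    unfolding F_def M_def using tc_diag[OF sa sd, of df "g dg"] by simp
  have val: "(f \<otimes>\<^bsub>ore_poly \<sigma> \<delta>\<^esub> g) M = f df * (\<sigma> ^^ df) (g dg)"
    using S1 S2 S3 S4 by simp
  have nz: "f df * (\<sigma> ^^ df) (g dg) \<noteq> 0" using f1 g1 ra_basic(4)[OF ra_pow[OF sa]] by simp
  have above: "(f \<otimes>\<^bsub>ore_poly \<sigma> \<delta>\<^esub> g) m = 0" if m: "M < m" for m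
  proof (rule ccontr)
    assume "(f \<otimes>\<^bsub>ore_poly \<sigma> \<delta>\<^esub> g) m \<noteq> 0"
    then obtain i j where ij: "f i \<noteq> 0" "g j \<noteq> 0" "m \<le> i + j" using p_nz_bound[OF sa sd] by blast
    have "i \<le> df" "j \<le> dg" using f3 g3 ij by auto
    then show False using ij m unfolding M_def by simp
  qed
  show "f \<otimes>\<^bsub>ore_poly \<sigma> \<delta>\<^esub> g \<noteq> (\<lambda>i. 0)"
  proof
    assume "f \<otimes>\<^bsub>ore_poly \<sigma> \<delta>\<^esub> g = (\<lambda>i. 0)"
    then have "(f \<otimes>\<^bsub>ore_poly \<sigma> \<delta>\<^esub> g) M = (\<lambda>i. 0) M" by (rule fun_cong)
    then have "(f \<otimes>\<^bsub>ore_poly \<sigma> \<delta>\<^esub> g) M = 0" by (simp only:)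
    then show False using val nz by simp
  qed
  have fin: "finite {i. (f \<otimes>\<^bsub>ore_poly \<sigma> \<delta>\<^esub> g) i \<noteq> 0}"
    using p_closed[OF sa sd f g] unfolding p_carrier by simp
  have "pdeg (f \<otimes>\<^bsub>ore_poly \<sigma> \<delta>\<^esub> g) = M"
  proof (rule pdeg_eq[OF fin])
    show "(f \<otimes>\<^bsub>ore_poly \<sigma> \<delta>\<^esub> g) M \<noteq> 0" using val nz by simp
    show "\<And>i. M < i \<Longrightarrow> (f \<otimes>\<^bsub>ore_poly \<sigma> \<delta>\<^esub> g) i = 0" by (rule above)
  qed
  then show "pdeg (f \<otimes>\<^bsub>ore_poly \<sigma> \<delta>\<^esub> g) = pdeg f + pdeg g" unfolding M_def df_def dg_def .
qed

lemma p_const_carrier: "const_poly c \<in> carrier (ore_poly \<sigma> \<delta>)"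
proof -
  have "{i. const_poly c i \<noteq> 0} \<subseteq> {0}" unfolding const_poly_def by auto
  then show ?thesis unfolding p_carrier using finite_subset by blast
qed

lemma p_const_mult:
  assumes f: "f \<in> carrier (ore_poly \<sigma> \<delta>)"
  shows "const_poly c \<otimes>\<^bsub>ore_poly \<sigma> \<delta>\<^esub> f = (\<lambda>m. c * f m)"
proof
  fix m
  have ff: "finite {i. f i \<noteq> 0}" using f unfolding p_carrier by auto
  define A where "A = {(i, j). const_poly c i \<noteq> 0 \<and> f j \<noteq> 0 \<and> j \<le> m}"
  have Afin: "finite A"
  proof (rule finite_subset)
    show "A \<subseteq> {0} \<times> {i. f i \<noteq> 0}" unfolding A_def const_poly_def by auto
  qed (use ff in auto)
  have "(\<Sum>p\<in>A. const_poly c (fst p) * tcoeff \<sigma> \<delta> (fst p) (f (snd p)) (m - snd p)) =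
        (\<Sum>p\<in>A \<inter> {(0, m)}. const_poly c (fst p) * tcoeff \<sigma> \<delta> (fst p) (f (snd p)) (m - snd p))"
  proof (rule sum.mono_neutral_right[OF Afin])
    show "\<forall>p\<in>A - A \<inter> {(0, m)}. const_poly c (fst p) * tcoeff \<sigma> \<delta> (fst p) (f (snd p)) (m - snd p) = 0"
    proof
      fix p assume p: "p \<in> A - A \<inter> {(0, m)}"
      obtain i j where ij: "p = (i, j)" by fastforce
      have "i = 0" "j \<le> m" "j \<noteq> m" using p unfolding ij A_def const_poly_def by (auto split: if_splits)
      then show "const_poly c (fst p) * tcoeff \<sigma> \<delta> (fst p) (f (snd p)) (m - snd p) = 0"
        unfolding ij by simp
    qed
  qed auto
  also have "\<dots> = c * f m"
  proof (cases "c \<noteq> 0 \<and> f m \<noteq> 0")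
    case True
    then have "A \<inter> {(0, m)} = {(0, m)}" unfolding A_def const_poly_def by auto
    then show ?thesis by (simp add: const_poly_def)
  next
    case False
    then have "A \<inter> {(0, m)} = {}" unfolding A_def const_poly_def by auto
    then show ?thesis using False by auto
  qed
  finally show "(const_poly c \<otimes>\<^bsub>ore_poly \<sigma> \<delta>\<^esub> f) m = c * f m"
    unfolding p_mult A_def by simp
qed

lemma p_const_const: "const_poly a \<otimes>\<^bsub>ore_poly \<sigma> \<delta>\<^esub> const_poly b = const_poly (a * b)"
  unfolding p_const_mult[OF p_const_carrier] by (auto simp: const_poly_def)

lemma p_sub_carrier:
  assumes "u \<in> carrier (ore_poly \<sigma> \<delta>)" "v \<in> carrier (ore_poly \<sigma> \<delta>)"
  shows "(\<lambda>i. u i - v i) \<in> carrier (ore_poly \<sigma> \<delta>)"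
proof -
  have sub: "{i. u i - v i \<noteq> 0} \<subseteq> {i. u i \<noteq> 0} \<union> {i. v i \<noteq> 0}" by auto
  have "finite ({i. u i \<noteq> 0} \<union> {i. v i \<noteq> 0})" using assms unfolding p_carrier by simp
  then have "finite {i. u i - v i \<noteq> 0}" using finite_subset[OF sub] by blast
  then show ?thesis unfolding p_carrier by simp
qed

lemma p_scale_carrier:
  assumes "u \<in> carrier (ore_poly \<sigma> \<delta>)"
  shows "(\<lambda>i. c * u i) \<in> carrier (ore_poly \<sigma> \<delta>)"
proof -
  have sub: "{i. c * u i \<noteq> 0} \<subseteq> {i. u i \<noteq> 0}" by auto
  have "finite {i. u i \<noteq> 0}" using assms unfolding p_carrier by simp
  then have "finite {i. c * u i \<noteq> 0}" using finite_subset[OF sub] by blast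
  then show ?thesis unfolding p_carrier by simp
qed


section \<open>The skew field of fractions\<close>

locale skf = ring D for D :: "'b ring" (structure) +
  fixes \<sigma> \<delta> :: "'a::division_ring \<Rightarrow> 'a" and \<phi> :: "(nat \<Rightarrow> 'a) \<Rightarrow> 'b"
  assumes sa: "ring_automorphism \<sigma>" and sd: "sigma_derivation \<sigma> \<delta>"
    and units: "\<And>x. x \<in> carrier D \<Longrightarrow> x \<noteq> \<zero> \<Longrightarrow> x \<in> Units D"
    and hom: "\<phi> \<in> ring_hom (ore_poly \<sigma> \<delta>) D"
    and inj: "inj_on \<phi> (carrier (ore_poly \<sigma> \<delta>))"
    and surj: "\<And>x. x \<in> carrier D \<Longrightarrow> \<exists>p\<in>carrier (ore_poly \<sigma> \<delta>). \<exists>q\<in>carrier (ore_poly \<sigma> \<delta>).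
                  q \<noteq> (\<lambda>i. 0) \<and> x = \<phi> p \<otimes> inv (\<phi> q)"
begin

abbreviation "PC \<equiv> carrier (ore_poly \<sigma> \<delta>)"
abbreviation "pmul f g \<equiv> f \<otimes>\<^bsub>ore_poly \<sigma> \<delta>\<^esub> g"
abbreviation "iota c \<equiv> \<phi> (const_poly c)"

lemma phi_closed: "p \<in> PC \<Longrightarrow> \<phi> p \<in> carrier D"
  using ring_hom_closed[OF hom] .

lemma phi_mult: "p \<in> PC \<Longrightarrow> q \<in> PC \<Longrightarrow> \<phi> (pmul p q) = \<phi> p \<otimes> \<phi> q"
  using ring_hom_mult[OF hom] .

lemma phi_add: "p \<in> PC \<Longrightarrow> q \<in> PC \<Longrightarrow> \<phi> (p \<oplus>\<^bsub>ore_poly \<sigma> \<delta>\<^esub> q) = \<phi> p \<oplus> \<phi> q"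
  using ring_hom_add[OF hom] .

lemma pz_carrier: "(\<lambda>i. 0) \<in> PC" by (simp add: p_carrier)

lemma pmul_closed: "p \<in> PC \<Longrightarrow> q \<in> PC \<Longrightarrow> pmul p q \<in> PC"
  using p_closed[OF sa sd] .

lemma pmul_nz: "p \<in> PC \<Longrightarrow> q \<in> PC \<Longrightarrow> p \<noteq> (\<lambda>i. 0) \<Longrightarrow> q \<noteq> (\<lambda>i. 0) \<Longrightarrow> pmul p q \<noteq> (\<lambda>i. 0)"
  using p_deg(1)[OF sa sd] .

lemma pmul_deg: "p \<in> PC \<Longrightarrow> q \<in> PC \<Longrightarrow> p \<noteq> (\<lambda>i. 0) \<Longrightarrow> q \<noteq> (\<lambda>i. 0) \<Longrightarrow> pdeg (pmul p q) = pdeg p + pdeg q"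
  using p_deg(2)[OF sa sd] .

lemma phi_zero: "\<phi> (\<lambda>i. 0) = \<zero>"
proof -
  have "(\<lambda>i. 0) \<oplus>\<^bsub>ore_poly \<sigma> \<delta>\<^esub> (\<lambda>i. 0) = (\<lambda>i::nat. 0::'a)" by (simp add: p_add)
  then have "\<phi> (\<lambda>i. 0) \<oplus> \<phi> (\<lambda>i. 0) = \<phi> (\<lambda>i. 0)" using phi_add[OF pz_carrier pz_carrier] by simp
  then show ?thesis using phi_closed[OF pz_carrier] add.l_cancel_one by simp
qed

lemma phi_nz: "q \<in> PC \<Longrightarrow> q \<noteq> (\<lambda>i. 0) \<Longrightarrow> \<phi> q \<noteq> \<zero>"
  using inj_onD[OF inj, of q "\<lambda>i. 0"] pz_carrier phi_zero by auto

lemma phi_unit: "q \<in> PC \<Longrightarrow> q \<noteq> (\<lambda>i. 0) \<Longrightarrow> \<phi> q \<in> Units D"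
  using units phi_closed phi_nz by blast

lemma phi_inj: "p \<in> PC \<Longrightarrow> q \<in> PC \<Longrightarrow> \<phi> p = \<phi> q \<Longrightarrow> p = q"
  using inj_onD[OF inj] by blast

lemma phi_sub:
  assumes u: "u \<in> PC" and v: "v \<in> PC"
  shows "\<phi> (\<lambda>i. u i - v i) = \<phi> u \<ominus> \<phi> v"
proof -
  have dc: "(\<lambda>i. u i - v i) \<in> PC" using p_sub_carrier[OF u v] .
  have "(\<lambda>i. u i - v i) \<oplus>\<^bsub>ore_poly \<sigma> \<delta>\<^esub> v = u" by (simp add: p_add)
  then have e: "\<phi> u = \<phi> (\<lambda>i. u i - v i) \<oplus> \<phi> v" using phi_add[OF dc v] by simp
  show ?thesis unfolding minus_eq
    using add.inv_solve_right[OF phi_closed[OF dc] phi_closed[OF u] phi_closed[OF v]] e by simp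
qed

lemma const_carrier: "const_poly c \<in> PC" by (rule p_const_carrier)

lemma iota_closed: "iota c \<in> carrier D" using phi_closed[OF const_carrier] .

lemma iota_mult: "iota (a * b) = iota a \<otimes> iota b"
proof -
  have "iota (a * b) = \<phi> (pmul (const_poly a) (const_poly b))"
    using p_const_const[where a=a and b=b and \<sigma>=\<sigma> and \<delta>=\<delta>] by simp
  also have "\<dots> = iota a \<otimes> iota b" by (rule phi_mult[OF const_carrier const_carrier])
  finally show ?thesis .
qed

lemma iota_sub: "iota (a - b) = iota a \<ominus> iota b"
proof -
  have "const_poly (a - b) = (\<lambda>i. const_poly a i - const_poly b i)" by (auto simp: const_poly_def)
  then show ?thesis using phi_sub[OF const_carrier const_carrier] by simp
qed

lemma iota_zero: "iota 0 = \<zero>"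
proof -
  have "const_poly (0::'a) = (\<lambda>i. 0)" by (auto simp: const_poly_def)
  then show ?thesis using phi_zero by simp
qed

lemma iota_one: "iota 1 = \<one>"
  using ring_hom_one[OF hom] p_one[where \<sigma>=\<sigma> and \<delta>=\<delta>] by simp

definition Rrep :: "'b \<Rightarrow> (nat \<Rightarrow> 'a) \<Rightarrow> (nat \<Rightarrow> 'a) \<Rightarrow> bool" where
  "Rrep x p q \<longleftrightarrow> x \<in> carrier D \<and> p \<in> PC \<and> q \<in> PC \<and> q \<noteq> (\<lambda>i. 0) \<and> x \<otimes> \<phi> q = \<phi> p"

lemma R_exists: "x \<in> carrier D \<Longrightarrow> \<exists>p q. Rrep x p q"
proof -
  assume x: "x \<in> carrier D"
  obtain p q where pq: "p \<in> PC" "q \<in> PC" "q \<noteq> (\<lambda>i. 0)" "x = \<phi> p \<otimes> inv (\<phi> q)" using surj[OF x] by blast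
  have u: "\<phi> q \<in> Units D" using phi_unit pq by blast
  have "x \<otimes> \<phi> q = \<phi> p \<otimes> (inv (\<phi> q) \<otimes> \<phi> q)"
    unfolding pq(4) using u phi_closed[OF pq(1)] by (simp add: m_assoc Units_closed)
  also have "\<dots> = \<phi> p" using u phi_closed[OF pq(1)] by simp
  finally show ?thesis using pq x unfolding Rrep_def by blast
qed

lemma R_zero:
  assumes R: "Rrep x p q" shows "x = \<zero> \<longleftrightarrow> p = (\<lambda>i. 0)"
proof
  have x: "x \<in> carrier D" and p: "p \<in> PC" and q: "q \<in> PC" "q \<noteq> (\<lambda>i. 0)" and e: "x \<otimes> \<phi> q = \<phi> p"
    using R unfolding Rrep_def by auto
  have u: "\<phi> q \<in> Units D" using phi_unit q by blast
  {
    assume "x = \<zero>"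
    then have "\<phi> p = \<phi> (\<lambda>i. 0)" using e phi_zero phi_closed[OF q(1)] by simp
    then show "p = (\<lambda>i. 0)" using phi_inj[OF p pz_carrier] by blast
  next
    assume "p = (\<lambda>i. 0)"
    then have e0: "x \<otimes> \<phi> q = \<zero>" using e phi_zero by simp
    have "x = x \<otimes> \<phi> q \<otimes> inv (\<phi> q)" using u x by (simp add: m_assoc Units_closed)
    then show "x = \<zero>" using e0 u by simp
  }
qed

lemma R_mult:
  assumes R: "Rrep x p q" and a: "a \<in> PC" "a \<noteq> (\<lambda>i. 0)"
  shows "Rrep x (pmul p a) (pmul q a)"
proof -
  have x: "x \<in> carrier D" and p: "p \<in> PC" and q: "q \<in> PC" "q \<noteq> (\<lambda>i. 0)" and e: "x \<otimes> \<phi> q = \<phi> p"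
    using R unfolding Rrep_def by auto
  have "x \<otimes> \<phi> (pmul q a) = (x \<otimes> \<phi> q) \<otimes> \<phi> a"
    using phi_mult[OF q(1) a(1)] x phi_closed[OF q(1)] phi_closed[OF a(1)] by (simp add: m_assoc)
  also have "\<dots> = \<phi> (pmul p a)" using e phi_mult[OF p a(1)] by simp
  finally show ?thesis unfolding Rrep_def
    using x pmul_closed[OF p a(1)] pmul_closed[OF q(1) a(1)] pmul_nz[OF q(1) a(1) q(2) a(2)] by blast
qed

lemma ore:
  assumes q1: "q1 \<in> PC" "q1 \<noteq> (\<lambda>i. 0)" and q2: "q2 \<in> PC" "q2 \<noteq> (\<lambda>i. 0)"
  shows "\<exists>a b. a \<in> PC \<and> b \<in> PC \<and> a \<noteq> (\<lambda>i. 0) \<and> b \<noteq> (\<lambda>i. 0) \<and> pmul q1 a = pmul q2 b"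
proof -
  have u1: "\<phi> q1 \<in> Units D" using phi_unit q1 by blast
  have c1: "\<phi> q1 \<in> carrier D" and c2: "\<phi> q2 \<in> carrier D" using phi_closed q1 q2 by auto
  define y where "y = inv (\<phi> q1) \<otimes> \<phi> q2"
  have yc: "y \<in> carrier D" unfolding y_def using u1 c2 by simp
  have qy: "\<phi> q1 \<otimes> y = \<phi> q2" unfolding y_def using u1 c2 by (simp add: m_assoc[symmetric] Units_closed)
  obtain a b where R: "Rrep y a b" using R_exists[OF yc] by blast
  have a: "a \<in> PC" and b: "b \<in> PC" "b \<noteq> (\<lambda>i. 0)" and e: "y \<otimes> \<phi> b = \<phi> a"
    using R unfolding Rrep_def by auto
  have ynz: "y \<noteq> \<zero>"
  proof
    assume "y = \<zero>"
    then have "\<phi> q2 = \<zero>" using qy c1 by simp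
    then show False using phi_nz q2 by blast
  qed
  have anz: "a \<noteq> (\<lambda>i. 0)" using R_zero[OF R] ynz by blast
  have "\<phi> (pmul q1 a) = \<phi> q1 \<otimes> (y \<otimes> \<phi> b)" using phi_mult[OF q1(1) a] e by simp
  also have "\<dots> = (\<phi> q1 \<otimes> y) \<otimes> \<phi> b" using c1 yc phi_closed[OF b(1)] by (simp add: m_assoc)
  also have "\<dots> = \<phi> (pmul q2 b)" using qy phi_mult[OF q2(1) b(1)] by simp
  finally have "pmul q1 a = pmul q2 b" using phi_inj pmul_closed q1(1) q2(1) a b(1) by blast
  then show ?thesis using a b anz by blast
qed

lemma R_wd:
  assumes R1: "Rrep x p q" and R2: "Rrep x p' q'" and x: "x \<noteq> \<zero>"
  shows "int (pdeg p) - int (pdeg q) = int (pdeg p') - int (pdeg q')"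
proof -
  have p: "p \<in> PC" and q: "q \<in> PC" "q \<noteq> (\<lambda>i. 0)" using R1 unfolding Rrep_def by auto
  have p': "p' \<in> PC" and q': "q' \<in> PC" "q' \<noteq> (\<lambda>i. 0)" using R2 unfolding Rrep_def by auto
  have pnz: "p \<noteq> (\<lambda>i. 0)" using R_zero[OF R1] x by blast
  have pnz': "p' \<noteq> (\<lambda>i. 0)" using R_zero[OF R2] x by blast
  obtain a b where ab: "a \<in> PC" "b \<in> PC" "a \<noteq> (\<lambda>i. 0)" "b \<noteq> (\<lambda>i. 0)" "pmul q a = pmul q' b"
    using ore[OF q q'] by blast
  have Ra: "Rrep x (pmul p a) (pmul q a)" using R_mult[OF R1 ab(1,3)] .
  have Rb: "Rrep x (pmul p' b) (pmul q a)" using R_mult[OF R2 ab(2,4)] ab(5) by simp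
  have "\<phi> (pmul p a) = \<phi> (pmul p' b)" using Ra Rb unfolding Rrep_def by auto
  then have eq: "pmul p a = pmul p' b" using phi_inj pmul_closed p p' ab(1,2) by blast
  have d1: "pdeg p + pdeg a = pdeg p' + pdeg b"
    using pmul_deg[OF p ab(1) pnz ab(3)] pmul_deg[OF p' ab(2) pnz' ab(4)] eq by simp
  have d2: "pdeg q + pdeg a = pdeg q' + pdeg b"
    using pmul_deg[OF q(1) ab(1) q(2) ab(3)] pmul_deg[OF q'(1) ab(2) q'(2) ab(4)] ab(5) by simp
  show ?thesis using d1 d2 by linarith
qed

definition val :: "'b \<Rightarrow> int" where
  "val x = (SOME d. \<exists>p q. Rrep x p q \<and> d = int (pdeg p) - int (pdeg q))"

lemma R_val: assumes "Rrep x p q" "x \<noteq> \<zero>" shows "val x = int (pdeg p) - int (pdeg q)"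
proof -
  have "\<exists>d. \<exists>p q. Rrep x p q \<and> d = int (pdeg p) - int (pdeg q)" using assms(1) by blast
  then have "\<exists>p' q'. Rrep x p' q' \<and> val x = int (pdeg p') - int (pdeg q')"
    unfolding val_def by (rule someI_ex)
  then obtain p' q' where "Rrep x p' q'" "val x = int (pdeg p') - int (pdeg q')" by blast
  then show ?thesis using R_wd[OF assms(1) _ assms(2)] by metis
qed

end


context skf
begin

lemma iota_add: "iota (a + b) = iota a \<oplus> iota b"
proof -
  have "const_poly (a + b) = const_poly a \<oplus>\<^bsub>ore_poly \<sigma> \<delta>\<^esub> const_poly b"
    by (auto simp: const_poly_def p_add)
  then show ?thesis using phi_add[OF const_carrier const_carrier] by simp
qed

lemma Rfacts:
  assumes "Rrep x p q"
  shows "x \<in> carrier D" "p \<in> PC" "q \<in> PC" "q \<noteq> (\<lambda>i. 0)" "x \<otimes> \<phi> q = \<phi> p"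
  using assms unfolding Rrep_def by auto

lemma pdeg_PC:
  assumes "p \<in> PC" "p \<noteq> (\<lambda>i. 0)"
  shows "p (pdeg p) \<noteq> 0" "\<And>i. pdeg p < i \<Longrightarrow> p i = 0"
proof -
  have f: "finite {i. p i \<noteq> 0}" using assms(1) unfolding p_carrier by simp
  show "p (pdeg p) \<noteq> 0" by (rule pdeg_facts(1)[OF f assms(2)])
  fix i assume "pdeg p < i" then show "p i = 0" by (rule pdeg_facts(2)[OF f assms(2)])
qed

lemma pdeg_PC_eq:
  assumes "p \<in> PC" "p d \<noteq> 0" "\<And>i. d < i \<Longrightarrow> p i = 0"
  shows "pdeg p = d"
proof -
  have f: "finite {i. p i \<noteq> 0}" using assms(1) unfolding p_carrier by simp
  show ?thesis by (rule pdeg_eq[OF f assms(2,3)])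
qed

lemma V1:
  assumes x: "x \<in> carrier D" "x \<noteq> \<zero>" and c: "c \<noteq> 0"
  shows "iota c \<otimes> x \<noteq> \<zero>" "val (iota c \<otimes> x) = val x"
proof -
  obtain p q where R: "Rrep x p q" using R_exists x by blast
  note Rf = Rfacts[OF R]
  have pnz: "p \<noteq> (\<lambda>i. 0)" using R_zero[OF R] x by blast
  define p' where "p' = (\<lambda>m. c * p m)"
  have pp: "pmul (const_poly c) p = p'" unfolding p'_def by (rule p_const_mult[OF Rf(2)])
  have p'c: "p' \<in> PC" unfolding p'_def using p_scale_carrier[OF Rf(2)] .
  have "(iota c \<otimes> x) \<otimes> \<phi> q = iota c \<otimes> (x \<otimes> \<phi> q)"
    using iota_closed x phi_closed[OF Rf(3)] by (simp add: m_assoc)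
  also have "\<dots> = \<phi> p'"
  proof -
    have "\<phi> p' = iota c \<otimes> \<phi> p" unfolding pp[symmetric] by (rule phi_mult[OF const_carrier Rf(2)])
    then show ?thesis unfolding Rf(5) by (rule sym)
  qed
  finally have R': "Rrep (iota c \<otimes> x) p' q" unfolding Rrep_def using iota_closed x p'c Rf by blast
  have d1: "p (pdeg p) \<noteq> 0" "\<And>i. pdeg p < i \<Longrightarrow> p i = 0" using pdeg_PC[OF Rf(2) pnz] by auto
  have p'nz: "p' (pdeg p) \<noteq> 0" unfolding p'_def using d1 c by simp
  have degeq: "pdeg p' = pdeg p" by (rule pdeg_PC_eq[OF p'c p'nz]) (simp add: p'_def d1)
  have p'nz2: "p' \<noteq> (\<lambda>i. 0)" using p'nz by auto
  show nz: "iota c \<otimes> x \<noteq> \<zero>" using R_zero[OF R'] p'nz2 by blast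
  show "val (iota c \<otimes> x) = val x" using R_val[OF R' nz] R_val[OF R x(2)] degeq by simp
qed

lemma l_minus_distr: "a \<in> carrier D \<Longrightarrow> b \<in> carrier D \<Longrightarrow> c \<in> carrier D \<Longrightarrow> (a \<ominus> b) \<otimes> c = a \<otimes> c \<ominus> b \<otimes> c"
  by (simp add: minus_eq l_distr l_minus)

lemma V2:
  assumes x1: "x1 \<in> carrier D" "x1 \<noteq> \<zero>" and x2: "x2 \<in> carrier D" "x2 \<noteq> \<zero>" and ne: "val x1 \<noteq> val x2"
  shows "x1 \<ominus> x2 \<noteq> \<zero> \<and> (val (x1 \<ominus> x2) = val x1 \<or> val (x1 \<ominus> x2) = val x2)"
proof -
  obtain p1 q1 where R1: "Rrep x1 p1 q1" using R_exists x1 by blast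
  obtain p2 q2 where R2: "Rrep x2 p2 q2" using R_exists x2 by blast
  note Rf1 = Rfacts[OF R1] and Rf2 = Rfacts[OF R2]
  have p1nz: "p1 \<noteq> (\<lambda>i. 0)" using R_zero[OF R1] x1 by blast
  have p2nz: "p2 \<noteq> (\<lambda>i. 0)" using R_zero[OF R2] x2 by blast
  obtain a b where ab: "a \<in> PC" "b \<in> PC" "a \<noteq> (\<lambda>i. 0)" "b \<noteq> (\<lambda>i. 0)" "pmul q1 a = pmul q2 b"
    using ore[OF Rf1(3,4) Rf2(3,4)] by blast
  define Q where "Q = pmul q1 a"
  define u where "u = pmul p1 a"
  define v where "v = pmul p2 b"
  have Ra: "Rrep x1 u Q" unfolding u_def Q_def using R_mult[OF R1 ab(1,3)] .
  have Rb: "Rrep x2 v Q" unfolding v_def Q_def using R_mult[OF R2 ab(2,4)] ab(5) by simp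
  have uc: "u \<in> PC" and vc: "v \<in> PC" using Rfacts[OF Ra] Rfacts[OF Rb] by auto
  have Qc: "Q \<in> PC" "Q \<noteq> (\<lambda>i. 0)" using Rfacts[OF Ra] by auto
  have unz: "u \<noteq> (\<lambda>i. 0)" unfolding u_def using pmul_nz[OF Rf1(2) ab(1) p1nz ab(3)] .
  have vnz: "v \<noteq> (\<lambda>i. 0)" unfolding v_def using pmul_nz[OF Rf2(2) ab(2) p2nz ab(4)] .
  have val1: "val x1 = int (pdeg u) - int (pdeg Q)" using R_val[OF Ra x1(2)] .
  have val2: "val x2 = int (pdeg v) - int (pdeg Q)" using R_val[OF Rb x2(2)] .
  have dne: "pdeg u \<noteq> pdeg v" using ne val1 val2 by auto
  define d where "d = (\<lambda>i. u i - v i)"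
  have dc: "d \<in> PC" unfolding d_def using p_sub_carrier[OF uc vc] .
  have "(x1 \<ominus> x2) \<otimes> \<phi> Q = x1 \<otimes> \<phi> Q \<ominus> x2 \<otimes> \<phi> Q"
    using l_minus_distr x1(1) x2(1) phi_closed[OF Qc(1)] by blast
  also have "\<dots> = \<phi> d" unfolding d_def using Rfacts(5)[OF Ra] Rfacts(5)[OF Rb] phi_sub[OF uc vc] by simp
  finally have Rd: "Rrep (x1 \<ominus> x2) d Q" unfolding Rrep_def using x1 x2 dc Qc by blast
  have u1: "u (pdeg u) \<noteq> 0" "\<And>i. pdeg u < i \<Longrightarrow> u i = 0" using pdeg_PC[OF uc unz] by auto
  have v1: "v (pdeg v) \<noteq> 0" "\<And>i. pdeg v < i \<Longrightarrow> v i = 0" using pdeg_PC[OF vc vnz] by auto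
  show ?thesis
  proof (cases "pdeg v < pdeg u")
    case True
    have dd: "d (pdeg u) \<noteq> 0" unfolding d_def using u1 v1 True by simp
    have deg: "pdeg d = pdeg u"
    proof (rule pdeg_PC_eq[OF dc dd])
      fix i assume "pdeg u < i" then show "d i = 0" unfolding d_def using u1(2)[of i] v1(2)[of i] True by simp
    qed
    have dnz: "d \<noteq> (\<lambda>i. 0)" using dd by auto
    have nz: "x1 \<ominus> x2 \<noteq> \<zero>" using R_zero[OF Rd] dnz by blast
    then show ?thesis using R_val[OF Rd nz] deg val1 by simp
  next
    case False
    then have lt: "pdeg u < pdeg v" using dne by simp
    have dd: "d (pdeg v) \<noteq> 0" unfolding d_def using u1 v1 lt by simp
    have deg: "pdeg d = pdeg v"
    proof (rule pdeg_PC_eq[OF dc dd])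
      fix i assume "pdeg v < i" then show "d i = 0" unfolding d_def using u1(2)[of i] v1(2)[of i] lt by simp
    qed
    have dnz: "d \<noteq> (\<lambda>i. 0)" using dd by auto
    have nz: "x1 \<ominus> x2 \<noteq> \<zero>" using R_zero[OF Rd] dnz by blast
    then show ?thesis using R_val[OF Rd nz] deg val2 by simp
  qed
qed

lemma Vmul:
  assumes x1: "x1 \<in> carrier D" "x1 \<noteq> \<zero>" and x2: "x2 \<in> carrier D" "x2 \<noteq> \<zero>"
  shows "x1 \<otimes> x2 \<noteq> \<zero>" "val (x1 \<otimes> x2) = val x1 + val x2"
proof -
  obtain p1 q1 where R1: "Rrep x1 p1 q1" using R_exists x1 by blast
  obtain p2 q2 where R2: "Rrep x2 p2 q2" using R_exists x2 by blast
  note Rf1 = Rfacts[OF R1] and Rf2 = Rfacts[OF R2]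
  have p1nz: "p1 \<noteq> (\<lambda>i. 0)" using R_zero[OF R1] x1 by blast
  have p2nz: "p2 \<noteq> (\<lambda>i. 0)" using R_zero[OF R2] x2 by blast
  obtain a b where ab: "a \<in> PC" "b \<in> PC" "a \<noteq> (\<lambda>i. 0)" "b \<noteq> (\<lambda>i. 0)" "pmul q1 a = pmul p2 b"
    using ore[OF Rf1(3,4) Rf2(2) p2nz] by blast
  have c1: "\<phi> q1 \<in> carrier D" "\<phi> q2 \<in> carrier D" "\<phi> a \<in> carrier D" "\<phi> b \<in> carrier D" "\<phi> p2 \<in> carrier D"
    using phi_closed Rf1 Rf2 ab by auto
  have "(x1 \<otimes> x2) \<otimes> \<phi> (pmul q2 b) = x1 \<otimes> ((x2 \<otimes> \<phi> q2) \<otimes> \<phi> b)"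
    using phi_mult[OF Rf2(3) ab(2)] x1 x2 c1 by (simp add: m_assoc)
  also have "\<dots> = x1 \<otimes> \<phi> (pmul p2 b)" using Rf2(5) phi_mult[OF Rf2(2) ab(2)] by simp
  also have "\<dots> = x1 \<otimes> (\<phi> q1 \<otimes> \<phi> a)" using ab(5) phi_mult[OF Rf1(3) ab(1)] by simp
  also have "\<dots> = (x1 \<otimes> \<phi> q1) \<otimes> \<phi> a" using x1 c1 by (simp add: m_assoc)
  also have "\<dots> = \<phi> (pmul p1 a)" using Rf1(5) phi_mult[OF Rf1(2) ab(1)] by simp
  finally have R: "Rrep (x1 \<otimes> x2) (pmul p1 a) (pmul q2 b)" unfolding Rrep_def
    using x1 x2 pmul_closed Rf1 Rf2 ab pmul_nz[OF Rf2(3) ab(2) Rf2(4) ab(4)] by auto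
  have nz1: "pmul p1 a \<noteq> (\<lambda>i. 0)" using pmul_nz[OF Rf1(2) ab(1) p1nz ab(3)] .
  show nz: "x1 \<otimes> x2 \<noteq> \<zero>" using R_zero[OF R] nz1 by blast
  have e1: "pdeg (pmul p1 a) = pdeg p1 + pdeg a" using pmul_deg[OF Rf1(2) ab(1) p1nz ab(3)] .
  have e2: "pdeg (pmul q2 b) = pdeg q2 + pdeg b" using pmul_deg[OF Rf2(3) ab(2) Rf2(4) ab(4)] .
  have e3: "pdeg q1 + pdeg a = pdeg p2 + pdeg b"
    using pmul_deg[OF Rf1(3) ab(1) Rf1(4) ab(3)] pmul_deg[OF Rf2(2) ab(2) p2nz ab(4)] ab(5) by simp
  show "val (x1 \<otimes> x2) = val x1 + val x2"
    using R_val[OF R nz] R_val[OF R1 x1(2)] R_val[OF R2 x2(2)] e1 e2 e3 by linarith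
qed

definition VSD :: "'b set \<Rightarrow> int set" where
  "VSD S = {w. \<exists>c. (\<Oplus>s\<in>S. iota (c s) \<otimes> s) \<noteq> \<zero> \<and> w = val (\<Oplus>s\<in>S. iota (c s) \<otimes> s)}"

lemma comb_closed: "S \<subseteq> carrier D \<Longrightarrow> (\<lambda>s. iota (c s) \<otimes> s) \<in> S \<rightarrow> carrier D"
  using iota_closed by auto

lemma VSD_norm:
  assumes S: "finite S" "S \<subseteq> carrier D" and s: "s \<in> carrier D" "s \<notin> S"
    and w: "w \<in> VSD (insert s S)" "w \<notin> VSD S"
  shows "\<exists>c. s \<oplus> (\<Oplus>t\<in>S. iota (c t) \<otimes> t) \<noteq> \<zero> \<and> w = val (s \<oplus> (\<Oplus>t\<in>S. iota (c t) \<otimes> t))"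
proof -
  have "\<exists>c. (\<Oplus>t\<in>insert s S. iota (c t) \<otimes> t) \<noteq> \<zero> \<and> w = val (\<Oplus>t\<in>insert s S. iota (c t) \<otimes> t)"
    using w(1) by (simp only: VSD_def mem_Collect_eq)
  then obtain c where cc: "(\<Oplus>t\<in>insert s S. iota (c t) \<otimes> t) \<noteq> \<zero> \<and> w = val (\<Oplus>t\<in>insert s S. iota (c t) \<otimes> t)"
    by (rule exE)
  have c: "(\<Oplus>t\<in>insert s S. iota (c t) \<otimes> t) \<noteq> \<zero>" "w = val (\<Oplus>t\<in>insert s S. iota (c t) \<otimes> t)"
    using cc by (rule conjunct1, rule conjunct2)
  define F where "F = (\<Oplus>t\<in>S. iota (c t) \<otimes> t)"
  have Fc: "F \<in> carrier D" unfolding F_def using comb_closed[OF S(2)] by simp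
  have E: "(\<Oplus>t\<in>insert s S. iota (c t) \<otimes> t) = iota (c s) \<otimes> s \<oplus> F"
    unfolding F_def by (rule finsum_insert[OF S(1) s(2)]) (use comb_closed[OF S(2)] s iota_closed in auto)
  have cs: "c s \<noteq> 0"
  proof
    assume "c s = 0"
    then have "(\<Oplus>t\<in>insert s S. iota (c t) \<otimes> t) = F" unfolding E using iota_zero s Fc by simp
    then have "F \<noteq> \<zero> \<and> w = val F" using c by simp
    then have "w \<in> VSD S" unfolding VSD_def F_def mem_Collect_eq by (rule exI[where x=c])
    then show False using w(2) by blast
  qed
  define a where "a = c s"
  define c' where "c' = (\<lambda>t. inverse a * c t)"
  have Ec: "(\<Oplus>t\<in>insert s S. iota (c t) \<otimes> t) \<in> carrier D" using comb_closed[OF S(2)] s iota_closed by (simp add: E Fc)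
  have ia: "iota (inverse a) \<otimes> iota a = \<one>"
    using iota_mult[of "inverse a" a] iota_one cs unfolding a_def by simp
  have "iota (inverse a) \<otimes> (iota (c s) \<otimes> s) = (iota (inverse a) \<otimes> iota a) \<otimes> s"
    unfolding a_def using iota_closed s by (intro m_assoc[symmetric]) auto
  then have "iota (inverse a) \<otimes> (iota (c s) \<otimes> s) = s" using ia s by simp
  moreover have "iota (inverse a) \<otimes> F = (\<Oplus>t\<in>S. iota (c' t) \<otimes> t)"
  proof -
    have "iota (inverse a) \<otimes> F = (\<Oplus>t\<in>S. iota (inverse a) \<otimes> (iota (c t) \<otimes> t))"
      unfolding F_def using finsum_rdistr[OF S(1) iota_closed comb_closed[OF S(2)]] .
    also have "\<dots> = (\<Oplus>t\<in>S. iota (c' t) \<otimes> t)"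
    proof (rule finsum_cong')
      show "(\<lambda>t. iota (c' t) \<otimes> t) \<in> S \<rightarrow> carrier D" using comb_closed[OF S(2)] .
      fix t assume "t \<in> S"
      then have "t \<in> carrier D" using S(2) by blast
      have "iota (inverse a) \<otimes> (iota (c t) \<otimes> t) = (iota (inverse a) \<otimes> iota (c t)) \<otimes> t"
        using iota_closed \<open>t \<in> carrier D\<close> by (intro m_assoc[symmetric]) auto
      then show "iota (inverse a) \<otimes> (iota (c t) \<otimes> t) = iota (c' t) \<otimes> t"
        unfolding c'_def using iota_mult by simp
    qed simp
    finally show ?thesis .
  qed
  ultimately have E': "iota (inverse a) \<otimes> (\<Oplus>t\<in>insert s S. iota (c t) \<otimes> t) = s \<oplus> (\<Oplus>t\<in>S. iota (c' t) \<otimes> t)"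
    unfolding E using iota_closed s Fc by (simp add: r_distr)
  have ian: "inverse a \<noteq> 0" using cs unfolding a_def by simp
  have r1: "s \<oplus> (\<Oplus>t\<in>S. iota (c' t) \<otimes> t) \<noteq> \<zero>" using V1(1)[OF Ec c(1) ian] unfolding E' .
  have r2: "w = val (s \<oplus> (\<Oplus>t\<in>S. iota (c' t) \<otimes> t))" using V1(2)[OF Ec c(1) ian] c(2) unfolding E' by simp
  show ?thesis using conjI[OF r1 r2] by (rule exI[where x=c'])
qed

lemma minus_sum_eq: "s \<in> carrier D \<Longrightarrow> a \<in> carrier D \<Longrightarrow> b \<in> carrier D \<Longrightarrow> (s \<oplus> a) \<ominus> (s \<oplus> b) = a \<ominus> b"
  by algebra

lemma VSD_finite:
  assumes "finite S" "S \<subseteq> carrier D" shows "finite (VSD S)"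
  using assms
proof (induction S rule: finite_induct)
  case empty
  have "VSD {} = {}" unfolding VSD_def by simp
  then show ?case by simp
next
  case (insert s S)
  have S: "finite S" "S \<subseteq> carrier D" and s: "s \<in> carrier D" "s \<notin> S" using insert by auto
  have key: "w1 = w2" if w1: "w1 \<in> VSD (insert s S) - VSD S" and w2: "w2 \<in> VSD (insert s S) - VSD S" for w1 w2
  proof (rule ccontr)
    assume ne: "w1 \<noteq> w2"
    have w1': "w1 \<in> VSD (insert s S)" "w1 \<notin> VSD S" and w2': "w2 \<in> VSD (insert s S)" "w2 \<notin> VSD S"
      using w1 w2 by blast+
    obtain c1 where cc1: "s \<oplus> (\<Oplus>t\<in>S. iota (c1 t) \<otimes> t) \<noteq> \<zero> \<and> w1 = val (s \<oplus> (\<Oplus>t\<in>S. iota (c1 t) \<otimes> t))"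
      using VSD_norm[OF S s w1'] by (rule exE)
    obtain c2 where cc2: "s \<oplus> (\<Oplus>t\<in>S. iota (c2 t) \<otimes> t) \<noteq> \<zero> \<and> w2 = val (s \<oplus> (\<Oplus>t\<in>S. iota (c2 t) \<otimes> t))"
      using VSD_norm[OF S s w2'] by (rule exE)
    have c1: "s \<oplus> (\<Oplus>t\<in>S. iota (c1 t) \<otimes> t) \<noteq> \<zero>" "w1 = val (s \<oplus> (\<Oplus>t\<in>S. iota (c1 t) \<otimes> t))"
      using cc1 by (rule conjunct1, rule conjunct2)
    have c2: "s \<oplus> (\<Oplus>t\<in>S. iota (c2 t) \<otimes> t) \<noteq> \<zero>" "w2 = val (s \<oplus> (\<Oplus>t\<in>S. iota (c2 t) \<otimes> t))"
      using cc2 by (rule conjunct1, rule conjunct2)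
    define F1 where "F1 = (\<Oplus>t\<in>S. iota (c1 t) \<otimes> t)"
    define F2 where "F2 = (\<Oplus>t\<in>S. iota (c2 t) \<otimes> t)"
    define G where "G = (\<Oplus>t\<in>S. iota (c1 t - c2 t) \<otimes> t)"
    have F1c: "F1 \<in> carrier D" and F2c: "F2 \<in> carrier D" and Gc: "G \<in> carrier D"
      unfolding F1_def F2_def G_def using comb_closed[OF S(2)] by simp_all
    have "G \<oplus> F2 = (\<Oplus>t\<in>S. iota (c1 t - c2 t) \<otimes> t \<oplus> iota (c2 t) \<otimes> t)"
      unfolding G_def F2_def using comb_closed[OF S(2)] by (simp add: finsum_addf)
    also have "\<dots> = F1" unfolding F1_def
    proof (rule finsum_cong')
      show "(\<lambda>t. iota (c1 t) \<otimes> t) \<in> S \<rightarrow> carrier D" using comb_closed[OF S(2)] .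
      fix t assume "t \<in> S"
      then have t: "t \<in> carrier D" using S(2) by blast
      have "iota (c1 t - c2 t) \<otimes> t \<oplus> iota (c2 t) \<otimes> t = (iota (c1 t - c2 t) \<oplus> iota (c2 t)) \<otimes> t"
        using t iota_closed by (simp add: l_distr)
      also have "\<dots> = iota (c1 t) \<otimes> t" using iota_add[of "c1 t - c2 t" "c2 t"] by simp
      finally show "iota (c1 t - c2 t) \<otimes> t \<oplus> iota (c2 t) \<otimes> t = iota (c1 t) \<otimes> t" .
    qed simp
    finally have GF: "G \<oplus> F2 = F1" .
    have GD: "G = F1 \<ominus> F2" unfolding minus_eq
      using add.inv_solve_right[OF Gc F1c F2c] GF by simp
    have e1c: "s \<oplus> F1 \<in> carrier D" and e2c: "s \<oplus> F2 \<in> carrier D" using s F1c F2c by auto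
    have diff: "(s \<oplus> F1) \<ominus> (s \<oplus> F2) = G" unfolding GD using minus_sum_eq[OF s(1) F1c F2c] .
    have V: "(s \<oplus> F1) \<ominus> (s \<oplus> F2) \<noteq> \<zero> \<and> (val ((s \<oplus> F1) \<ominus> (s \<oplus> F2)) = val (s \<oplus> F1) \<or> val ((s \<oplus> F1) \<ominus> (s \<oplus> F2)) = val (s \<oplus> F2))"
      by (rule V2) (use e1c e2c c1 c2 ne in \<open>auto simp: F1_def F2_def\<close>)
    then have "G \<noteq> \<zero>" "val G = w1 \<or> val G = w2" unfolding diff using c1 c2 by (auto simp: F1_def F2_def)
    then have "(G \<noteq> \<zero> \<and> w1 = val G) \<or> (G \<noteq> \<zero> \<and> w2 = val G)" by auto
    then have "w1 \<in> VSD S \<or> w2 \<in> VSD S" unfolding VSD_def G_def mem_Collect_eq by (auto intro: exI)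
    then show False using w1' w2' by auto
  qed
  have "finite (VSD (insert s S) - VSD S)" by (rule finite_subsingleton) (use key in blast)
  moreover have "VSD (insert s S) \<subseteq> VSD S \<union> (VSD (insert s S) - VSD S)" by blast
  ultimately show ?case using insert.IH S finite_subset by blast
qed

end


context skf
begin

lemma minus_zero_eq: "x \<in> carrier D \<Longrightarrow> a \<in> carrier D \<Longrightarrow> x \<ominus> a = \<zero> \<Longrightarrow> x = a"
proof -
  assume x: "x \<in> carrier D" and a: "a \<in> carrier D" and e: "x \<ominus> a = \<zero>"
  have "x = x \<ominus> a \<oplus> a" using x a by algebra
  then show "x = a" using e a by simp
qed

lemma D_regular: "regular_ext D (\<phi> \<circ> const_poly)"
  unfolding regular_ext_def
proof (intro ballI impI)
  fix x assume x: "x \<in> carrier D" and alg: "algebraic_over D (\<phi> \<circ> const_poly) x"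
  show "x \<in> range (\<phi> \<circ> const_poly)"
  proof (rule ccontr)
    assume xn: "x \<notin> range (\<phi> \<circ> const_poly)"
    let ?V = "gen_subfield D (\<phi> \<circ> const_poly) x"
    have sub: "?V \<subseteq> carrier D"
    proof (rule gen_sub_carrier)
      show "\<And>a. (\<phi> \<circ> const_poly) a \<in> carrier D" using iota_closed by simp
      show "x \<in> carrier D" by (fact x)
      show "\<And>u v. u \<in> carrier D \<Longrightarrow> v \<in> carrier D \<Longrightarrow> u \<oplus> v \<in> carrier D" by (rule a_closed)
      show "\<And>u. u \<in> carrier D \<Longrightarrow> \<ominus> u \<in> carrier D" by (rule a_inv_closed)
      show "\<And>u v. u \<in> carrier D \<Longrightarrow> v \<in> carrier D \<Longrightarrow> u \<otimes> v \<in> carrier D" by (rule m_closed)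
      show "\<And>u. u \<in> Units D \<Longrightarrow> inv u \<in> carrier D" by (rule Units_inv_closed)
    qed
    have fd: "fin_dim_left D (\<phi> \<circ> const_poly) ?V" using alg unfolding algebraic_over_def by (rule conjunct1)
    have "\<exists>S. finite S \<and> S \<subseteq> ?V \<and> (\<forall>y\<in>?V. \<exists>c. y = (\<Oplus>s\<in>S. (\<phi> \<circ> const_poly) (c s) \<otimes> s))"
      using fd unfolding fin_dim_left_def .
    then obtain S where SS: "finite S \<and> S \<subseteq> ?V \<and> (\<forall>y\<in>?V. \<exists>c. y = (\<Oplus>s\<in>S. (\<phi> \<circ> const_poly) (c s) \<otimes> s))"
      by (rule exE)
    have S1: "finite S" using SS by (rule conjunct1)
    have S2: "S \<subseteq> ?V" using SS by blast
    have S3: "\<forall>y\<in>?V. \<exists>c. y = (\<Oplus>s\<in>S. (\<phi> \<circ> const_poly) (c s) \<otimes> s)" using SS by blast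
    have SD: "S \<subseteq> carrier D" using S2 sub by blast
    have inspan: "val y \<in> VSD S" if y: "y \<in> ?V" "y \<noteq> \<zero>" for y
    proof -
      obtain c where c: "y = (\<Oplus>s\<in>S. (\<phi> \<circ> const_poly) (c s) \<otimes> s)" using S3 y(1) by blast
      have c': "y = (\<Oplus>s\<in>S. iota (c s) \<otimes> s)" using c unfolding comp_def .
      have "(\<Oplus>s\<in>S. iota (c s) \<otimes> s) \<noteq> \<zero> \<and> val y = val (\<Oplus>s\<in>S. iota (c s) \<otimes> s)"
        using y(2) c' by simp
      then show ?thesis unfolding VSD_def mem_Collect_eq by (rule exI[where x=c])
    qed
    have x0: "x \<noteq> \<zero>"
    proof
      assume "x = \<zero>"
      then have "x = (\<phi> \<circ> const_poly) 0" using iota_zero by simp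
      then show False using xn by blast
    qed
    have "\<exists>y. y \<in> ?V \<and> y \<in> carrier D \<and> y \<noteq> \<zero> \<and> val y \<noteq> 0"
    proof (cases "val x = 0")
      case False
      have "x \<in> ?V" by (rule gen_subfield.gen)
      then show ?thesis using x x0 False by blast
    next
      case True
      obtain p q where R: "Rrep x p q" using R_exists[OF x] by blast
      note Rf = Rfacts[OF R]
      have pnz: "p \<noteq> (\<lambda>i. 0)" using R_zero[OF R] x0 by blast
      have "int (pdeg p) - int (pdeg q) = 0" using R_val[OF R x0] True by simp
      then have pq: "pdeg p = pdeg q" by simp
      define n where "n = pdeg q"
      have qn: "q n \<noteq> 0" and qh: "\<And>i. n < i \<Longrightarrow> q i = 0" using pdeg_PC[OF Rf(3,4)] unfolding n_def by auto
      have ph: "\<And>i. n < i \<Longrightarrow> p i = 0" using pdeg_PC[OF Rf(2) pnz] pq unfolding n_def by auto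
      define c where "c = p n * inverse (q n)"
      define y where "y = x \<oplus> \<ominus> (\<phi> \<circ> const_poly) c"
      have yV: "y \<in> ?V" unfolding y_def
        by (intro gen_subfield.add gen_subfield.gen gen_subfield.neg gen_subfield.base)
      have ye: "y = x \<ominus> iota c" unfolding y_def minus_eq by simp
      have yc: "y \<in> carrier D" unfolding ye using x iota_closed by simp
      define r where "r = (\<lambda>i. p i - c * q i)"
      have cq: "(\<lambda>i. c * q i) \<in> PC" using p_scale_carrier[OF Rf(3)] .
      have rc: "r \<in> PC" unfolding r_def using p_sub_carrier[OF Rf(2) cq] by simp
      have "y \<otimes> \<phi> q = x \<otimes> \<phi> q \<ominus> iota c \<otimes> \<phi> q"
        unfolding ye using l_minus_distr x iota_closed phi_closed[OF Rf(3)] by blast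
      also have "\<dots> = \<phi> p \<ominus> \<phi> (\<lambda>i. c * q i)"
      proof -
        have "iota c \<otimes> \<phi> q = \<phi> (pmul (const_poly c) q)" by (rule phi_mult[OF const_carrier Rf(3), symmetric])
        also have "\<dots> = \<phi> (\<lambda>i. c * q i)" using p_const_mult[OF Rf(3)] by (simp only:)
        finally show ?thesis unfolding Rf(5) by (simp only:)
      qed
      also have "\<dots> = \<phi> r" unfolding r_def using phi_sub[OF Rf(2) cq] by (simp only:)
      finally have Ry: "Rrep y r q" unfolding Rrep_def using yc rc Rf by blast
      have rn: "r n = 0" unfolding r_def c_def using qn by (simp add: mult.assoc)
      have rh: "\<And>i. n < i \<Longrightarrow> r i = 0" unfolding r_def using ph qh by simp
      have rnz: "r \<noteq> (\<lambda>i. 0)"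
      proof
        assume "r = (\<lambda>i. 0)"
        then have "y = \<zero>" using R_zero[OF Ry] by blast
        then have "x = iota c" using minus_zero_eq[OF x iota_closed] unfolding ye by blast
        then have "x = (\<phi> \<circ> const_poly) c" by simp
        then show False using xn by blast
      qed
      have rd: "r (pdeg r) \<noteq> 0" using pdeg_PC[OF rc rnz] by blast
      have "pdeg r < n"
      proof (rule ccontr)
        assume "\<not> pdeg r < n"
        then have "pdeg r = n \<or> n < pdeg r" by auto
        then show False using rd rn rh by auto
      qed
      have ynz: "y \<noteq> \<zero>" using R_zero[OF Ry] rnz by blast
      have "val y = int (pdeg r) - int n" using R_val[OF Ry ynz] unfolding n_def .
      then have "val y \<noteq> 0" using \<open>pdeg r < n\<close> by simp
      then show ?thesis using yV yc ynz by blast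
    qed
    then obtain y where y: "y \<in> ?V" "y \<in> carrier D" "y \<noteq> \<zero>" "val y \<noteq> 0" by blast
    define pw where "pw = (\<lambda>j. ((\<lambda>z. y \<otimes> z) ^^ j) y)"
    have pw: "pw j \<in> ?V \<and> pw j \<in> carrier D \<and> pw j \<noteq> \<zero> \<and> val (pw j) = (int j + 1) * val y" for j
    proof (induction j)
      case 0
      have e: "pw 0 = y" by (simp add: pw_def)
      have a1: "pw 0 \<in> ?V" unfolding e by (rule y(1))
      have a2: "pw 0 \<in> carrier D" unfolding e by (rule y(2))
      have a3: "pw 0 \<noteq> \<zero>" unfolding e by (rule y(3))
      have a4: "val (pw 0) = (int 0 + 1) * val y" unfolding e by simp
      show ?case by (rule conjI[OF a1 conjI[OF a2 conjI[OF a3 a4]]])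
    next
      case (Suc j)
      have e: "pw (Suc j) = y \<otimes> pw j" unfolding pw_def by simp
      have c: "pw j \<in> carrier D" "pw j \<noteq> \<zero>" using Suc by auto
      have "pw (Suc j) \<noteq> \<zero>" unfolding e using Vmul(1)[OF y(2,3) c] .
      moreover have "val (pw (Suc j)) = (int (Suc j) + 1) * val y"
        unfolding e using Vmul(2)[OF y(2,3) c] Suc by (simp add: algebra_simps)
      moreover have "pw (Suc j) \<in> ?V"
      proof -
        have ih1: "pw j \<in> ?V" using Suc.IH by (rule conjunct1)
        show ?thesis unfolding e by (rule gen_subfield.mult[OF y(1) ih1])
      qed
      moreover have "pw (Suc j) \<in> carrier D" unfolding e using y(2) c by simp
      ultimately show ?case by blast
    qed
    show False
    proof (rule infinite_multiples[OF VSD_finite[OF S1 SD] y(4)])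
      fix j :: nat
      have "val (pw j) \<in> VSD S" using inspan pw by blast
      then show "(int j + 1) * val y \<in> VSD S" using pw by simp
    qed
  qed
qed

end

theorem proposition2:
  fixes \<sigma> \<delta> :: "'a::division_ring \<Rightarrow> 'a"
  assumes "ring_automorphism \<sigma>"
    and "sigma_derivation \<sigma> \<delta>"
  shows "regular_ext (skew_series_t \<sigma>) const_series
    \<and> regular_ext (skew_series_z \<sigma> \<delta>) const_series
    \<and> (\<forall>(D :: 'b ring) \<phi>. is_skew_fraction_field \<sigma> \<delta> D \<phi> \<longrightarrow> regular_ext D (\<phi> \<circ> const_poly))"
proof (intro conjI allI impI)
  show "regular_ext (skew_series_t \<sigma>) const_series" by (rule part_t[OF assms(1)])
  show "regular_ext (skew_series_z \<sigma> \<delta>) const_series" by (rule part_z[OF assms])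
  fix D :: "'b ring" and \<phi>
  assume F: "is_skew_fraction_field \<sigma> \<delta> D \<phi>"
  have dr: "division_ring_alg D" and hom: "\<phi> \<in> ring_hom (ore_poly \<sigma> \<delta>) D"
    and inj: "inj_on \<phi> (carrier (ore_poly \<sigma> \<delta>))"
    and surj: "\<forall>x\<in>carrier D. \<exists>p\<in>carrier (ore_poly \<sigma> \<delta>). \<exists>q\<in>carrier (ore_poly \<sigma> \<delta>).
           q \<noteq> \<zero>\<^bsub>ore_poly \<sigma> \<delta>\<^esub> \<and> x = \<phi> p \<otimes>\<^bsub>D\<^esub> inv\<^bsub>D\<^esub> (\<phi> q)"
    using F unfolding is_skew_fraction_field_def by blast+
  have rD: "ring D" and un: "\<And>x. x \<in> carrier D \<Longrightarrow> x \<noteq> \<zero>\<^bsub>D\<^esub> \<Longrightarrow> x \<in> Units D"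
    using dr unfolding division_ring_alg_def by blast+
  have "skf D \<sigma> \<delta> \<phi>"
  proof (intro skf.intro skf_axioms.intro)
    show "ring D" by (fact rD)
    show "ring_automorphism \<sigma>" by (fact assms(1))
    show "sigma_derivation \<sigma> \<delta>" by (fact assms(2))
    show "\<And>x. x \<in> carrier D \<Longrightarrow> x \<noteq> \<zero>\<^bsub>D\<^esub> \<Longrightarrow> x \<in> Units D" by (fact un)
    show "\<phi> \<in> ring_hom (ore_poly \<sigma> \<delta>) D" by (fact hom)
    show "inj_on \<phi> (carrier (ore_poly \<sigma> \<delta>))" by (fact inj)
    fix x assume "x \<in> carrier D"
    then show "\<exists>p\<in>carrier (ore_poly \<sigma> \<delta>). \<exists>q\<in>carrier (ore_poly \<sigma> \<delta>).
                  q \<noteq> (\<lambda>i. 0) \<and> x = \<phi> p \<otimes>\<^bsub>D\<^esub> inv\<^bsub>D\<^esub> (\<phi> q)"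
      using surj unfolding p_zero by blast
  qed
  then show "regular_ext D (\<phi> \<circ> const_poly)" by (rule skf.D_regular)
qed


end
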